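(* Let $P\subseteq\mathbb{R}^n$ be an $n$-dimensional lattice polytope whose normal fan is $\mathbb{Q}$-Gorenstein of index $r$. If $s\ge r\,\tau(P)$ is an integer, then $(sP)^{(r)}$ is a lattice polytope. In particular, $\mathrm{cd}(P)-1<r\,\tau(P)$.
   Context: Write an $n$-dimensional rational polytope $Q$ irredundantly as $Q=\{x:\langle a_i,x\rangle\ge b_i\}$ with primitive $a_i\in(\mathbb{Z}^n)^*$, each inequality defining a facet; $d_Q(x):=\min_i(\langle a_i,x\rangle-b_i)$, $Q^{(s)}:=\{x:d_Q(x)\ge s\}$. $\mathcal{N}(P)$ is the inner normal fan. A rational cone $\sigma\subseteq(\mathbb{R}^n)^*$ with primitive ray generators $w_1,\dots,w_k$ is $\mathbb{Q}$-Gorenstein of index $r_\sigma$ if there is a primitive $u_\sigma\in\mathbb{Z}^n$ with $\langle w_j,u_\sigma\rangle=r_\sigma$ for all $j$. $\mathcal{N}(P)$ is $\mathbb{Q}$-Gorenstein of index $r$ if all maximal cones are $\mathbb{Q}$-Gorenstein and $r=\mathrm{lcm}(r_\sigma:\sigma$ maximal cone$)$. The nef value is $\tau(P):=(\sup\{s>0:\mathcal{N}(P^{(s)})=\mathcal{N}(P)\})^{-1}$. The codegree is $\mathrm{cd}(P):=\min\{k\in\mathbb{Z}_{\ge1}:\mathrm{int}(kP)\cap\mathbb{Z}^n\neq\emptyset\}$. *)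

theory Defs
  imports "HOL-Analysis.Analysis"
begin

definition int_vec :: "real^'n \<Rightarrow> bool" where
  "int_vec x \<longleftrightarrow> (\<forall>i. x $ i \<in> \<int>)"

definition primitive_vec :: "real^'n \<Rightarrow> bool" where
  "primitive_vec a \<longleftrightarrow> int_vec a \<and> a \<noteq> 0 \<and>
     (\<forall>k::int. k > 1 \<longrightarrow> \<not> int_vec ((1 / real_of_int k) *\<^sub>R a))"

definition lattice_polytope :: "(real^'n) set \<Rightarrow> bool" where
  "lattice_polytope P \<longleftrightarrow>
     (\<exists>V. finite V \<and> V \<noteq> {} \<and> (\<forall>v\<in>V. int_vec v) \<and> P = convex hull V)"

definition facet_ineqs :: "(real^'n) set \<Rightarrow> ((real^'n) \<times> real) set" where
  "facet_ineqs Q = {(a, b). primitive_vec a \<and> (\<forall>x\<in>Q. a \<bullet> x \<ge> b)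
                     \<and> {x \<in> Q. a \<bullet> x = b} facet_of Q}"

definition lattice_dist :: "(real^'n) set \<Rightarrow> real^'n \<Rightarrow> real" where
  "lattice_dist Q x = Min ((\<lambda>(a, b). a \<bullet> x - b) ` facet_ineqs Q)"

definition inner_par :: "(real^'n) set \<Rightarrow> real \<Rightarrow> (real^'n) set" where
  "inner_par Q s = {x. lattice_dist Q x \<ge> s}"

definition normal_cone :: "(real^'n) set \<Rightarrow> (real^'n) set \<Rightarrow> (real^'n) set" where
  "normal_cone P F = {u. \<forall>x\<in>P. \<forall>y\<in>F. u \<bullet> y \<le> u \<bullet> x}"

definition normal_fan :: "(real^'n) set \<Rightarrow> (real^'n) set set" where
  "normal_fan P = {normal_cone P F | F. F face_of P \<and> F \<noteq> {}}"

definition max_cones :: "(real^'n) set set \<Rightarrow> (real^'n) set set" where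
  "max_cones \<Sigma> = {\<sigma> \<in> \<Sigma>. \<forall>\<tau>\<in>\<Sigma>. \<sigma> \<subseteq> \<tau> \<longrightarrow> \<tau> = \<sigma>}"

definition ray_gens :: "(real^'n) set \<Rightarrow> (real^'n) set" where
  "ray_gens \<sigma> = {w. primitive_vec w \<and> {c *\<^sub>R w | c. c \<ge> 0} face_of \<sigma>}"

definition QGor_cone :: "(real^'n) set \<Rightarrow> nat \<Rightarrow> bool" where
  "QGor_cone \<sigma> r \<longleftrightarrow> r > 0 \<and>
     (\<exists>u. primitive_vec u \<and> (\<forall>w\<in>ray_gens \<sigma>. w \<bullet> u = real r))"

definition gor_index :: "(real^'n) set \<Rightarrow> nat" where
  "gor_index \<sigma> = (THE r. QGor_cone \<sigma> r)"

definition QGor_fan :: "(real^'n) set set \<Rightarrow> nat \<Rightarrow> bool" where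
  "QGor_fan \<Sigma> r \<longleftrightarrow> (\<forall>\<sigma>\<in>max_cones \<Sigma>. \<exists>r\<sigma>. QGor_cone \<sigma> r\<sigma>)
     \<and> r = Lcm (gor_index ` max_cones \<Sigma>)"

definition nef_value :: "(real^'n) set \<Rightarrow> real" where
  "nef_value P = inverse (Sup {s. s > 0 \<and> normal_fan (inner_par P s) = normal_fan P})"

definition codegree :: "(real^'n) set \<Rightarrow> nat" where
  "codegree P = (LEAST k. k \<ge> 1 \<and>
     (\<exists>x. int_vec x \<and> x \<in> interior ((\<lambda>y. real k *\<^sub>R y) ` P)))"

end

theory Submission
  imports Defs
begin

lemma int_vec_iff: "int_vec x \<longleftrightarrow> (\<forall>i. \<exists>n::int. x $ i = of_int n)"
  unfolding int_vec_def Ints_def by auto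

lemma prim_unique:
  fixes a :: "real^'n"
  assumes pa: "primitive_vec a" and pc: "primitive_vec (c *\<^sub>R a)" and c: "c > 0"
  shows "c = 1"
proof -
  have ia: "int_vec a" and a0: "a \<noteq> 0" and na: "\<And>k::int. k > 1 \<Longrightarrow> \<not> int_vec ((1 / real_of_int k) *\<^sub>R a)"
    using pa unfolding primitive_vec_def by auto
  have ic: "int_vec (c *\<^sub>R a)" and nc: "\<And>k::int. k > 1 \<Longrightarrow> \<not> int_vec ((1 / real_of_int k) *\<^sub>R (c *\<^sub>R a))"
    using pc unfolding primitive_vec_def by auto
  obtain j where aj: "a $ j \<noteq> 0" using a0 by (metis vec_eq_iff zero_index)
  obtain A where A: "\<And>i. a $ i = of_int (A i)" using ia unfolding int_vec_iff by metis
  obtain B where B: "\<And>i. (c *\<^sub>R a) $ i = of_int (B i)" using ic unfolding int_vec_iff by metis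
  have "c = of_int (B j) / of_int (A j)" using A B aj by (metis nonzero_eq_divide_eq vector_scaleR_component mult.commute real_scaleR_def)
  then have "c \<in> \<rat>" by simp
  then obtain p q :: int where cpq: "c = of_int p / of_int q" and q0: "q > 0" and cop: "coprime p q"
    by (rule Rats_cases')
  have p0: "p > 0" using c cpq q0 by (simp add: zero_less_divide_iff)
  have eq: "q * B i = p * A i" for i
  proof -
    have "real_of_int (B i) = c * a $ i" using B[of i] by simp
    then have "real_of_int q * real_of_int (B i) = real_of_int p * real_of_int (A i)"
      using cpq q0 A[of i] by (simp add: field_simps)
    then show ?thesis by (metis of_int_eq_iff of_int_mult)
  qed
  have qd: "q dvd A i" for i
  proof -
    have "q dvd p * A i" using eq[of i] by (metis dvd_triv_left)
    then show ?thesis using cop by (meson coprime_commute coprime_dvd_mult_right_iff)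
  qed
  have q1: "q = 1"
  proof (rule ccontr)
    assume "q \<noteq> 1"
    then have "q > 1" using q0 by simp
    moreover have "int_vec ((1 / real_of_int q) *\<^sub>R a)"
      unfolding int_vec_iff
    proof
      fix i
      obtain m where "A i = q * m" using qd[of i] by (auto elim: dvdE)
      then have "((1 / real_of_int q) *\<^sub>R a) $ i = of_int m" using A[of i] q0 by simp
      then show "\<exists>n. ((1 / real_of_int q) *\<^sub>R a) $ i = real_of_int n" by blast
    qed
    ultimately show False using na by blast
  qed
  then have cp: "c = of_int p" using cpq by simp
  show ?thesis
  proof (rule ccontr)
    assume "c \<noteq> 1"
    then have "p > 1" using p0 cp by simp
    moreover have "(1 / real_of_int p) *\<^sub>R (c *\<^sub>R a) = a" using cp p0 by simp
    ultimately show False using nc ia by metis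
  qed
qed


lemma small_aux:
  fixes e g h :: real
  assumes "0 \<le> e" "e \<le> g / (\<bar>h\<bar> + 1)" "g > 0"
  shows "e * h < g"
proof -
  have pos: "\<bar>h\<bar> + 1 > 0" by simp
  have "e * (\<bar>h\<bar> + 1) \<le> g" using assms(2) pos by (simp add: le_divide_eq)
  moreover have "e * h \<le> e * \<bar>h\<bar>" using assms(1) by (simp add: mult_left_mono)
  ultimately have "e * h \<le> g - e" by (simp add: algebra_simps)
  then show ?thesis proof (cases "e = 0") case True then show ?thesis using assms by simp
  next case False then show ?thesis using \<open>e * h \<le> g - e\<close> assms(1) by linarith qed
qed

lemma ex_small:
  fixes g h :: "'a \<Rightarrow> real"
  assumes "finite I" "\<And>i. i \<in> I \<Longrightarrow> g i > 0"
  shows "\<exists>e>0. \<forall>i\<in>I. \<forall>e'. 0 \<le> e' \<and> e' \<le> e \<longrightarrow> e' * h i < g i"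
proof -
  define e where "e = Min (insert 1 ((\<lambda>i. g i / (\<bar>h i\<bar> + 1)) ` I))"
  have fin: "finite (insert 1 ((\<lambda>i. g i / (\<bar>h i\<bar> + 1)) ` I))" using assms(1) by simp
  have "e > 0" unfolding e_def using assms fin
    by (subst Min_gr_iff) (auto intro!: divide_pos_pos simp: add_pos_nonneg)
  moreover have "e \<le> g i / (\<bar>h i\<bar> + 1)" if "i \<in> I" for i
    unfolding e_def using fin that by (intro Min_le) auto
  ultimately show ?thesis using assms(2) small_aux by (meson order_trans)
qed

lemma convex_cone_hull_finite_sum:
  fixes C :: "'a::real_vector set"
  assumes "finite C" "u \<in> convex_cone hull C"
  shows "\<exists>l. (\<forall>c\<in>C. l c \<ge> 0) \<and> u = (\<Sum>c\<in>C. l c *\<^sub>R c)"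
proof -
  let ?R = "{u. \<exists>l. (\<forall>c\<in>C. l c \<ge> (0::real)) \<and> u = (\<Sum>c\<in>C. l c *\<^sub>R c)}"
  have sub: "C \<subseteq> ?R"
  proof
    fix c assume c: "c \<in> C"
    have "(\<Sum>d\<in>C. (if d = c then 1 else 0) *\<^sub>R d) = (\<Sum>d\<in>C. if d = c then d else 0)"
      by (rule sum.cong) auto
    also have "\<dots> = c" using c assms(1) by (simp add: sum.delta')
    finally have B: "c = (\<Sum>d\<in>C. (if d = c then 1 else 0) *\<^sub>R d)" by simp
    have A: "\<forall>d\<in>C. (if d = c then 1 else 0::real) \<ge> 0" by simp
    show "c \<in> ?R" by (rule CollectI, rule exI[of _ "\<lambda>d. if d = c then 1 else 0"], rule conjI[OF A B])
  qed
  have cc: "convex_cone ?R"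
    unfolding convex_cone_def
  proof (intro conjI)
    have "0 \<in> ?R" by (intro CollectI exI[of _ "\<lambda>_. 0"]) simp
    then show "?R \<noteq> {}" by blast
    show "convex ?R"
    proof (rule convexI)
      fix x y and s t :: real
      assume x: "x \<in> ?R" and y: "y \<in> ?R" and st: "0 \<le> s" "0 \<le> t" "s + t = 1"
      obtain l1 where l1: "\<forall>c\<in>C. l1 c \<ge> 0" "x = (\<Sum>c\<in>C. l1 c *\<^sub>R c)" using x by blast
      obtain l2 where l2: "\<forall>c\<in>C. l2 c \<ge> 0" "y = (\<Sum>c\<in>C. l2 c *\<^sub>R c)" using y by blast
      have B: "s *\<^sub>R x + t *\<^sub>R y = (\<Sum>c\<in>C. (s * l1 c + t * l2 c) *\<^sub>R c)"
        by (simp add: l1 l2 scaleR_sum_right sum.distrib scaleR_add_left)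
      have A: "\<forall>c\<in>C. s * l1 c + t * l2 c \<ge> 0" using l1 l2 st by simp
      show "s *\<^sub>R x + t *\<^sub>R y \<in> ?R" by (rule CollectI, rule exI[of _ "\<lambda>c. s * l1 c + t * l2 c"], rule conjI[OF A B])
    qed
    show "conic ?R"
      unfolding conic_def
    proof (intro allI impI)
      fix x and c :: real assume "x \<in> ?R" and c: "0 \<le> c"
      then obtain l where l: "\<forall>c\<in>C. l c \<ge> 0" "x = (\<Sum>c\<in>C. l c *\<^sub>R c)" by blast
      have B: "c *\<^sub>R x = (\<Sum>d\<in>C. (c * l d) *\<^sub>R d)" by (simp add: l scaleR_sum_right)
      have A: "\<forall>d\<in>C. c * l d \<ge> 0" using l c by simp
      show "c *\<^sub>R x \<in> ?R" by (rule CollectI, rule exI[of _ "\<lambda>d. c * l d"], rule conjI[OF A B])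
    qed
  qed
  have "convex_cone hull C \<subseteq> ?R" using sub cc by (rule hull_minimal)
  then have "u \<in> ?R" using assms(2) by (rule subsetD)
  then show ?thesis by (rule CollectD)
qed

lemma farkas:
  fixes A :: "((real^'n) \<times> real) set" and u y :: "real^'n"
  assumes fin: "finite A"
    and y: "\<forall>(c,d)\<in>A. d \<le> c \<bullet> y"
    and min: "\<And>x. \<forall>(c,d)\<in>A. d \<le> c \<bullet> x \<Longrightarrow> u \<bullet> y \<le> u \<bullet> x"
  shows "\<exists>l. (\<forall>c\<in>{c. \<exists>d. (c,d)\<in>A \<and> c \<bullet> y = d}. l c \<ge> 0) \<and>
             u = (\<Sum>c\<in>{c. \<exists>d. (c,d)\<in>A \<and> c \<bullet> y = d}. l c *\<^sub>R c)"
proof -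
  define K where "K = {c. \<exists>d. (c,d)\<in>A \<and> c \<bullet> y = d}"
  have finK: "finite K"
  proof -
    have "K \<subseteq> fst ` A" unfolding K_def by force
    then show ?thesis using fin finite_subset by blast
  qed
  have clo: "closed (convex_cone hull K)"
  proof (cases "K = {}")
    case True then show ?thesis by simp
  next
    case False
    then have "convex_cone hull K = conic hull (convex hull K)"
      by (rule convex_cone_hull_separate_nonempty)
    moreover have "polytope (convex hull K)" using finK unfolding polytope_def by blast
    ultimately show ?thesis using closed_conic_hull_strong by metis
  qed
  have "u \<in> convex_cone hull K"
  proof (rule ccontr)
    assume un: "u \<notin> convex_cone hull K"
    obtain z \<beta> where z: "z \<bullet> u < \<beta>" "\<forall>k\<in>convex_cone hull K. z \<bullet> k > \<beta>"
      using separating_hyperplane_closed_point[OF convex_convex_cone_hull clo un] by blast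
    have b0: "\<beta> < 0" using z(2) convex_cone_hull_contains_0 by fastforce
    have zk: "z \<bullet> k \<ge> 0" if "k \<in> K" for k
    proof (rule ccontr)
      assume "\<not> z \<bullet> k \<ge> 0"
      then have zk0: "z \<bullet> k < 0" by simp
      have kin: "k \<in> convex_cone hull K" using that by (rule hull_inc)
      have "\<beta> / (z \<bullet> k) \<ge> 0" using b0 zk0 by (simp add: divide_nonpos_neg)
      then have "(\<beta> / (z \<bullet> k)) *\<^sub>R k \<in> convex_cone hull K"
        by (rule conic_mul[OF conic_convex_cone_hull kin])
      then have "z \<bullet> ((\<beta> / (z \<bullet> k)) *\<^sub>R k) > \<beta>" using z(2) by blast
      then show False using zk0 by simp
    qed
    define I where "I = {(c,d)\<in>A. c \<bullet> y \<noteq> d}"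
    have finI: "finite I" using fin unfolding I_def by (auto intro: finite_subset)
    have Ipos: "fst i \<bullet> y - snd i > 0" if "i \<in> I" for i
    proof -
      obtain c d where i: "i = (c,d)" by force
      have "(c,d) \<in> A" "c \<bullet> y \<noteq> d" using that unfolding I_def i by auto
      then have "d \<le> c \<bullet> y" "c \<bullet> y \<noteq> d" using y by auto
      then show ?thesis unfolding i by simp
    qed
    obtain e where e: "e > 0" "\<forall>i\<in>I. \<forall>e'. 0 \<le> e' \<and> e' \<le> e \<longrightarrow> e' * (- (fst i \<bullet> z)) < fst i \<bullet> y - snd i"
      using ex_small[OF finI, of "\<lambda>i. fst i \<bullet> y - snd i" "\<lambda>i. - (fst i \<bullet> z)"] Ipos
      by blast
    have "\<forall>(c,d)\<in>A. d \<le> c \<bullet> (y + e *\<^sub>R z)"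
    proof (clarify)
      fix c d assume cd: "(c,d) \<in> A"
      show "d \<le> c \<bullet> (y + e *\<^sub>R z)"
      proof (cases "c \<bullet> y = d")
        case True
        then have "c \<in> K" using cd unfolding K_def by blast
        then have "0 \<le> c \<bullet> z" using zk[of c] by (simp add: inner_commute)
        then show ?thesis using True e(1) by (simp add: inner_add_right)
      next
        case False
        then have "(c,d) \<in> I" using cd unfolding I_def by blast
        then have "e * (- (c \<bullet> z)) < c \<bullet> y - d" using e by (metis fst_conv snd_conv order_refl less_imp_le)
        then show ?thesis by (simp add: inner_add_right)
      qed
    qed
    then have "u \<bullet> y \<le> u \<bullet> (y + e *\<^sub>R z)" by (rule min)
    moreover have "u \<bullet> z < 0" using z(1) b0 by (simp add: inner_commute)
    moreover have "e * (u \<bullet> z) < 0" using e(1) \<open>u \<bullet> z < 0\<close> by (rule mult_pos_neg)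
    ultimately show False by (simp add: inner_add_right)
  qed
  then show ?thesis using convex_cone_hull_finite_sum[OF finK] unfolding K_def by blast
qed


lemma parallel_core:
  fixes a u :: "real^'n" and D :: "(real^'n) set"
  assumes a0: "a \<noteq> 0" and aD: "\<forall>d\<in>D. a \<bullet> d = 0" and uD: "\<forall>d\<in>D. u \<bullet> d = 0"
    and dD: "dim D = CARD('n) - 1"
  shows "\<exists>c. u = c *\<^sub>R a"
proof -
  have nas: "a \<notin> span D"
  proof
    assume "a \<in> span D"
    then have "orthogonal a a" by (rule orthogonal_to_span) (use aD in \<open>auto simp: orthogonal_def\<close>)
    then show False using a0 by (simp add: orthogonal_def)
  qed
  have "dim (insert a D) = CARD('n)" using nas dD by (simp add: dim_insert)
  then have "span (insert a D) = UNIV" using dim_eq_full[of "insert a D"] by simp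
  then have "u \<in> span (insert a D)" by simp
  then obtain k where k: "u - k *\<^sub>R a \<in> span D" by (auto simp: span_insert)
  define d where "d = u - k *\<^sub>R a"
  have "orthogonal u d" using k unfolding d_def by (rule orthogonal_to_span) (use uD in \<open>auto simp: orthogonal_def\<close>)
  moreover have "orthogonal a d" using k unfolding d_def by (rule orthogonal_to_span) (use aD in \<open>auto simp: orthogonal_def\<close>)
  ultimately have "d \<bullet> d = 0" unfolding d_def orthogonal_def by (simp add: inner_diff_left inner_commute)
  then have "d = 0" by simp
  then show ?thesis unfolding d_def by (intro exI[of _ k]) simp
qed


definition rowrep :: "'n \<Rightarrow> ('n \<Rightarrow> real^'n) \<Rightarrow> real^'n \<Rightarrow> real^'n^'n" where
  "rowrep k f x = (\<chi> i. if i = k then x else f i)"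

lemma det_rowrep_lin:
  fixes x :: "real^'n"
  shows "det (rowrep k f x) = (\<Sum>j\<in>UNIV. x $ j * det (rowrep k f (axis j 1)))"
proof -
  have "det (rowrep k f x) = det (\<chi> i. if i = k then sum (\<lambda>j. x $ j *s axis j 1) UNIV else f i)"
    unfolding rowrep_def by (simp only: basis_expansion)
  also have "\<dots> = (\<Sum>j\<in>UNIV. det (\<chi> i. if i = k then x $ j *s axis j (1::real) else f i))"
    by (rule det_linear_row_sum) simp
  also have "\<dots> = (\<Sum>j\<in>UNIV. x $ j * det (rowrep k f (axis j 1)))"
    unfolding rowrep_def by (rule sum.cong[OF refl]) (rule det_row_mul)
  finally show ?thesis .
qed

lemma det_int:
  fixes A :: "real^'n^'n"
  assumes "\<And>i j. A $ i $ j \<in> \<int>"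
  shows "det A \<in> \<int>"
  unfolding det_def using assms by (intro Ints_sum Ints_mult Ints_prod) auto

lemma int_normal:
  fixes D :: "(real^'n) set"
  assumes finD: "finite D" and intD: "\<forall>d\<in>D. int_vec d" and dimD: "dim D < CARD('n)"
  shows "\<exists>c. int_vec c \<and> c \<noteq> 0 \<and> (\<forall>d\<in>D. c \<bullet> d = 0)"
proof -
  obtain B where B: "B \<subseteq> D" "independent B" "D \<subseteq> span B" "card B = dim D"
    by (rule basis_exists)
  obtain B' where B': "B \<subseteq> B'" "B' \<subseteq> B \<union> Basis" "independent B'" "B \<union> Basis \<subseteq> span B'"
    using maximal_independent_subset_extend[of B "B \<union> Basis"] B(2) by blast
  have finB': "finite B'" using B'(2) finD B(1) finite_subset by (metis finite_Basis finite_UnI finite_subset)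
  have "span B' = UNIV" using B'(4) span_Basis by (metis le_sup_iff span_mono span_span top.extremum_uniqueI)
  then have cardB': "card B' = CARD('n)"
    using dim_eq_card_independent[OF B'(3)] dim_eq_full[of B'] by simp
  have finB: "finite B" using B(1) finD finite_subset by blast
  have "B \<noteq> B'" using B(4) dimD cardB' by auto
  then obtain e where e: "e \<in> B'" "e \<notin> B" using B'(1) by blast
  obtain f where f: "bij_betw f (UNIV::'n set) B'"
    using finite_same_card_bij[of "UNIV::'n set" B'] finB' cardB' by auto
  obtain k where k: "f k = e" using f e(1) by (metis bij_betw_imp_surj_on imageE)
  define c :: "real^'n" where "c = (\<chi> j. det (rowrep k f (axis j 1)))"
  have cx: "c \<bullet> x = det (rowrep k f x)" for x
    unfolding c_def inner_vec_def using det_rowrep_lin[of k f x] by (simp add: mult.commute)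
  have fint: "int_vec (f i)" for i
  proof -
    have "f i \<in> B'" using f bij_betwE by blast
    then have "f i \<in> B \<union> Basis" using B'(2) by blast
    then show ?thesis
    proof
      assume "f i \<in> B" then show ?thesis using B(1) intD by blast
    next
      assume "f i \<in> Basis"
      then obtain m where "f i = axis m 1" unfolding Basis_vec_def by auto
      then show ?thesis unfolding int_vec_def by (simp add: axis_def)
    qed
  qed
  have cint: "int_vec c"
    unfolding int_vec_def c_def
  proof
    fix j
    show "(\<chi> j. det (rowrep k f (axis j 1))) $ j \<in> \<int>"
      using fint by (simp, intro det_int) (auto simp: rowrep_def axis_def int_vec_def)
  qed
  have rows: "rows (rowrep k f e) = B'"
  proof -
    have "rowrep k f e = (\<chi> i. f i)" unfolding rowrep_def using k by (simp add: vec_eq_iff)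
    then show ?thesis using f unfolding rows_def row_def by (auto simp: bij_betw_def)
  qed
  have "det (rowrep k f e) \<noteq> 0"
  proof
    assume "det (rowrep k f e) = 0"
    then have "rank (rowrep k f e) < CARD('n)" by (simp add: det_eq_0_rank)
    then have "dim B' < CARD('n)" using rows by (simp add: row_rank_def)
    then show False using dim_eq_card_independent[OF B'(3)] cardB' by simp
  qed
  then have c0: "c \<noteq> 0" using cx[of e] by auto
  have cB: "c \<bullet> d = 0" if d: "d \<in> B" for d
  proof -
    have "d \<in> B'" using d B'(1) by blast
    then obtain i where i: "f i = d" using f by (metis bij_betw_imp_surj_on imageE)
    have "i \<noteq> k" using i k e d by auto
    have "det (rowrep k f d) = 0"
      by (rule det_identical_rows[OF \<open>i \<noteq> k\<close>]) (simp add: rowrep_def row_def i vec_eq_iff \<open>i \<noteq> k\<close>)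
    then show ?thesis using cx by simp
  qed
  have "c \<bullet> d = 0" if "d \<in> D" for d
  proof -
    have "d \<in> span B" using that B(3) by blast
    then have "orthogonal c d" by (rule orthogonal_to_span) (use cB in \<open>auto simp: orthogonal_def\<close>)
    then show ?thesis by (simp add: orthogonal_def)
  qed
  then show ?thesis using cint c0 by blast
qed


lemma prim_exists:
  fixes c :: "real^'n"
  assumes ci: "int_vec c" and c0: "c \<noteq> 0"
  shows "\<exists>m::int. m \<ge> 1 \<and> primitive_vec ((1 / real_of_int m) *\<^sub>R c)"
proof -
  obtain j where cj: "c $ j \<noteq> 0" using c0 by (metis vec_eq_iff zero_index)
  define M where "M = {m::int. m \<ge> 1 \<and> int_vec ((1 / real_of_int m) *\<^sub>R c)}"
  have bnd: "m \<le> \<lfloor>\<bar>c $ j\<bar>\<rfloor>" if "m \<in> M" for m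
  proof -
    have m1: "m \<ge> 1" and iv: "int_vec ((1 / real_of_int m) *\<^sub>R c)" using that unfolding M_def by auto
    obtain n::int where n0: "((1 / real_of_int m) *\<^sub>R c) $ j = of_int n" using iv unfolding int_vec_iff by blast
    then have n: "c $ j / real_of_int m = of_int n" by simp
    have "n \<noteq> 0" using n cj m1 by auto
    then have "\<bar>real_of_int n\<bar> \<ge> 1" by linarith
    then have "\<bar>c $ j\<bar> / real_of_int m \<ge> 1" using n m1 by (simp add: abs_div_pos)
    then have "real_of_int m \<le> \<bar>c $ j\<bar>" using m1 by (simp add: le_divide_eq)
    then show ?thesis by linarith
  qed
  have "M \<subseteq> {1..\<lfloor>\<bar>c $ j\<bar>\<rfloor>}" using bnd unfolding M_def by auto
  then have finM: "finite M" by (rule finite_subset) simp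
  have 1: "1 \<in> M" unfolding M_def using ci by simp
  define m0 where "m0 = Max M"
  have m0M: "m0 \<in> M" unfolding m0_def using finM 1 by (intro Max_in) auto
  have m0max: "m \<le> m0" if "m \<in> M" for m unfolding m0_def using finM that by simp
  have m01: "m0 \<ge> 1" using m0M unfolding M_def by simp
  have "primitive_vec ((1 / real_of_int m0) *\<^sub>R c)"
    unfolding primitive_vec_def
  proof (intro conjI allI impI)
    show "int_vec ((1 / real_of_int m0) *\<^sub>R c)" using m0M unfolding M_def by simp
    show "(1 / real_of_int m0) *\<^sub>R c \<noteq> 0" using c0 m01 by simp
    fix k :: int assume k: "k > 1"
    show "\<not> int_vec ((1 / real_of_int k) *\<^sub>R (1 / real_of_int m0) *\<^sub>R c)"
    proof
      assume "int_vec ((1 / real_of_int k) *\<^sub>R (1 / real_of_int m0) *\<^sub>R c)"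
      moreover have "(1 / real_of_int k) *\<^sub>R (1 / real_of_int m0) *\<^sub>R c = (1 / real_of_int (k * m0)) *\<^sub>R c"
        by simp
      moreover have "1 * 1 \<le> k * m0" using k m01 by (intro mult_mono) auto
      ultimately have "k * m0 \<in> M" unfolding M_def by simp
      then have "k * m0 \<le> m0" by (rule m0max)
      moreover have "2 * m0 \<le> k * m0" using k m01 by (intro mult_right_mono) auto
      ultimately show False using m01 by linarith
    qed
  qed
  then show ?thesis using m01 by blast
qed

locale fdlp =
  fixes P :: "(real^'n) set"
  assumes lp: "lattice_polytope P" and fd: "aff_dim P = int CARD('n)"
begin

definition "FI = facet_ineqs P"

lemma V_ex: obtains V where "finite V" "V \<noteq> {}" "\<forall>v\<in>V. int_vec v" "P = convex hull V"
  using lp unfolding lattice_polytope_def by blast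

lemma polytope_P: "polytope P" using V_ex unfolding polytope_def by metis
lemma polyhedron_P: "polyhedron P" using polytope_P polytope_imp_polyhedron by blast
lemma compact_P: "compact P" using polytope_P polytope_imp_compact by blast
lemma convex_P: "convex P" using V_ex by (metis convex_convex_hull)
lemma P_ne: "P \<noteq> {}" using V_ex by (metis convex_hull_eq_empty)
lemma aff_P: "affine hull P = UNIV" using fd aff_dim_eq_full[of P] by simp

lemma FI_mem:
  assumes "(a,b) \<in> FI"
  shows "primitive_vec a" "\<forall>x\<in>P. b \<le> a \<bullet> x" "{x\<in>P. a \<bullet> x = b} facet_of P"
  using assms unfolding FI_def facet_ineqs_def by auto

lemma facet_dim:
  assumes G: "G facet_of P" and p: "p \<in> G"
  shows "dim ((\<lambda>x. x - p) ` G) = CARD('n) - 1"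
proof -
  have "aff_dim G = aff_dim P - 1" using G unfolding facet_of_def by simp
  moreover have "aff_dim G = int (dim ((+) (- p) ` G))" using p by (intro aff_dim_eq_dim) (simp add: hull_inc)
  moreover have "(+) (- p) ` G = (\<lambda>x. x - p) ` G" by (auto simp: algebra_simps)
  ultimately show ?thesis using fd by simp
qed

lemma normal_for_facet:
  assumes G: "G facet_of P" and a0: "a \<noteq> 0" and Pa: "P \<subseteq> {x. a \<bullet> x \<le> b}" and Geq: "G = P \<inter> {x. a \<bullet> x = b}"
  shows "\<exists>l>0. ((- l) *\<^sub>R a, - l * b) \<in> FI"
proof -
  obtain V where V: "finite V" "V \<noteq> {}" "\<forall>v\<in>V. int_vec v" "P = convex hull V" by (rule V_ex)
  obtain S where S: "S \<subseteq> V" "G = convex hull S"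
  proof -
    have "G face_of P" using G by (rule facet_of_imp_face_of)
    then have "G face_of convex hull V" using V(4) by simp
    from face_of_convex_hull_subset[OF finite_imp_compact[OF V(1)] this] show ?thesis using that by blast
  qed
  have Gne: "G \<noteq> {}" using G unfolding facet_of_def by blast
  then have "S \<noteq> {}" using S(2) by auto
  then obtain g0 where g0: "g0 \<in> S" by blast
  have g0G: "g0 \<in> G" unfolding S(2) using g0 by (rule hull_inc)
  define D where "D = (\<lambda>x. x - g0) ` S"
  have finD: "finite D" unfolding D_def using S V finite_subset by blast
  have intD: "\<forall>d\<in>D. int_vec d"
  proof
    fix d assume "d \<in> D"
    then obtain x where x: "x \<in> S" "d = x - g0" unfolding D_def by blast
    have "int_vec x" "int_vec g0" using x(1) g0 S(1) V(3) by auto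
    then show "int_vec d" unfolding x(2) int_vec_def by (simp add: Ints_diff)
  qed
  have "aff_dim G = aff_dim S" using S by (simp add: aff_dim_convex_hull)
  moreover have "aff_dim S = int (dim ((+) (- g0) ` S))" using g0 by (intro aff_dim_eq_dim) (simp add: hull_inc)
  moreover have "(+) (- g0) ` S = D" unfolding D_def by (auto simp: algebra_simps)
  moreover have "aff_dim G = aff_dim P - 1" using G unfolding facet_of_def by simp
  ultimately have dimD: "dim D = CARD('n) - 1" using fd by simp
  have "CARD('n) \<ge> 1" by (simp add: Suc_leI)
  then have "dim D < CARD('n)" using dimD by simp
  then obtain c where c: "int_vec c" "c \<noteq> 0" "\<forall>d\<in>D. c \<bullet> d = 0"
    using int_normal[OF finD intD] by blast
  have aD: "\<forall>d\<in>D. a \<bullet> d = 0"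
  proof
    fix d assume "d \<in> D"
    then obtain x where x: "x \<in> S" "d = x - g0" unfolding D_def by blast
    have "x \<in> G" unfolding S(2) using x(1) by (rule hull_inc)
    then show "a \<bullet> d = 0" using g0G Geq x by (simp add: inner_diff_right)
  qed
  obtain \<mu> where mu: "c = \<mu> *\<^sub>R a" using parallel_core[OF a0 aD c(3) dimD] by blast
  have mu0: "\<mu> \<noteq> 0" using mu c(2) by auto
  define c' where "c' = (if \<mu> < 0 then c else - c)"
  have c'eq: "c' = (- \<bar>\<mu>\<bar>) *\<^sub>R a"
  proof (cases "\<mu> < 0")
    case True then show ?thesis unfolding c'_def mu by simp
  next
    case False then have "\<bar>\<mu>\<bar> = \<mu>" by simp
    then show ?thesis using False unfolding c'_def mu by simp
  qed
  have c'i: "int_vec c'" using c(1) unfolding c'_def int_vec_def by (simp add: Ints_minus)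
  have c'0: "c' \<noteq> 0" using c'eq mu0 a0 by simp
  obtain m::int where m: "m \<ge> 1" "primitive_vec ((1 / real_of_int m) *\<^sub>R c')"
    using prim_exists[OF c'i c'0] by blast
  define l where "l = \<bar>\<mu>\<bar> / real_of_int m"
  have l0: "l > 0" unfolding l_def using mu0 m by simp
  have peq: "(1 / real_of_int m) *\<^sub>R c' = (- l) *\<^sub>R a" unfolding l_def c'eq by simp
  have "((- l) *\<^sub>R a, - l * b) \<in> FI"
    unfolding FI_def facet_ineqs_def
  proof (clarify, intro conjI)
    show "primitive_vec ((- l) *\<^sub>R a)" using m peq by simp
    show "\<forall>x\<in>P. - l * b \<le> (- l) *\<^sub>R a \<bullet> x"
    proof
      fix x assume "x \<in> P"
      then have "a \<bullet> x \<le> b" using Pa by blast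
      then have "l * (a \<bullet> x) \<le> l * b" using l0 by (intro mult_left_mono) auto
      then show "- l * b \<le> (- l) *\<^sub>R a \<bullet> x" by simp
    qed
    have "(- l) *\<^sub>R a \<bullet> x = - l * b \<longleftrightarrow> a \<bullet> x = b" for x using l0 by simp
    then have "{x \<in> P. (- l) *\<^sub>R a \<bullet> x = - l * b} = G" using Geq by auto
    then show "{x \<in> P. (- l) *\<^sub>R a \<bullet> x = - l * b} facet_of P" using G by simp
  qed
  then show ?thesis using l0 by blast
qed

lemma min_rep: obtains F a b where "finite F" "P = \<Inter>F"
   "\<And>h. h \<in> F \<Longrightarrow> a h \<noteq> 0 \<and> h = {x. a h \<bullet> x \<le> b h}"
   "\<And>F'. F' \<subset> F \<Longrightarrow> P \<subset> affine hull P \<inter> \<Inter>F'"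
   "\<And>h. h \<in> F \<Longrightarrow> (P \<inter> {x. a h \<bullet> x = b h}) facet_of P"
proof -
  obtain F where F: "finite F" "P = affine hull P \<inter> \<Inter>F"
      "\<And>h. h \<in> F \<Longrightarrow> \<exists>a b. a \<noteq> 0 \<and> h = {x. a \<bullet> x \<le> b}"
      "\<And>F'. F' \<subset> F \<Longrightarrow> P \<subset> affine hull P \<inter> \<Inter>F'"
    using polyhedron_P by (simp add: polyhedron_Int_affine_minimal) meson
  then obtain a b where ab: "\<And>h. h \<in> F \<Longrightarrow> a h \<noteq> 0 \<and> h = {x. a h \<bullet> x \<le> b h}"
    by metis
  have "(P \<inter> {x. a h \<bullet> x = b h}) facet_of P" if "h \<in> F" for h
    using facet_of_polyhedron_explicit[OF F(1) F(2) ab F(4)] that by blast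
  note fac = this
  have "P = \<Inter>F" using F(2) aff_P by simp
  show ?thesis by (rule that[of F a b, OF F(1) \<open>P = \<Inter>F\<close> ab F(4) fac])
qed

lemma P_eq: "P = {x. \<forall>(a,b)\<in>FI. b \<le> a \<bullet> x}"
proof
  show "P \<subseteq> {x. \<forall>(a,b)\<in>FI. b \<le> a \<bullet> x}" using FI_mem by blast
  show "{x. \<forall>(a,b)\<in>FI. b \<le> a \<bullet> x} \<subseteq> P"
  proof
    fix x assume x: "x \<in> {x. \<forall>(a,b)\<in>FI. b \<le> a \<bullet> x}"
    obtain F a b where F: "finite F" "P = \<Inter>F"
      "\<And>h. h \<in> F \<Longrightarrow> a h \<noteq> 0 \<and> h = {x. a h \<bullet> x \<le> b h}"
      "\<And>h. h \<in> F \<Longrightarrow> (P \<inter> {x. a h \<bullet> x = b h}) facet_of P"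
      by (rule min_rep) blast
    have "x \<in> h" if h: "h \<in> F" for h
    proof -
      have Pa: "P \<subseteq> {x. a h \<bullet> x \<le> b h}" using F(2,3) h by blast
      obtain l where l: "l > 0" "((- l) *\<^sub>R a h, - l * b h) \<in> FI"
        using normal_for_facet[OF F(4)[OF h] _ Pa refl] F(3)[OF h] by blast
      then have "- l * b h \<le> (- l) *\<^sub>R a h \<bullet> x" using x by blast
      then have "a h \<bullet> x \<le> b h" using l(1) by simp
      then show ?thesis using F(3)[OF h] by blast
    qed
    then show "x \<in> P" using F(2) by blast
  qed
qed

end

context fdlp begin

lemma FI_out:
  assumes "(a,b) \<in> FI" shows "\<exists>x\<in>P. b < a \<bullet> x"
proof (rule ccontr)
  assume "\<not> ?thesis"
  then have "\<forall>x\<in>P. a \<bullet> x = b" using FI_mem(2)[OF assms] by force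
  then have "{x\<in>P. a \<bullet> x = b} = P" by blast
  then show False using FI_mem(3)[OF assms] facet_of_irrefl by metis
qed

lemma FI_a0: "(a,b) \<in> FI \<Longrightarrow> a \<noteq> 0" using FI_mem(1) unfolding primitive_vec_def by blast

lemma FI_facet_ne: "(a,b) \<in> FI \<Longrightarrow> {x\<in>P. a \<bullet> x = b} \<noteq> {}"
  using FI_mem(3) unfolding facet_of_def by blast

lemma FI_b_unique:
  assumes "(a,b) \<in> FI" "(a,b') \<in> FI" shows "b = b'"
proof -
  obtain x where x: "x \<in> P" "a \<bullet> x = b" using FI_facet_ne[OF assms(1)] by blast
  obtain x' where x': "x' \<in> P" "a \<bullet> x' = b'" using FI_facet_ne[OF assms(2)] by blast
  have "b' \<le> a \<bullet> x" using FI_mem(2)[OF assms(2)] x(1) by blast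
  moreover have "b \<le> a \<bullet> x'" using FI_mem(2)[OF assms(1)] x'(1) by blast
  ultimately show ?thesis using x x' by linarith
qed

lemma FI_unique:
  assumes ab: "(a,b) \<in> FI" and ab': "(a',b') \<in> FI" and eq: "{x\<in>P. a \<bullet> x = b} = {x\<in>P. a' \<bullet> x = b'}"
  shows "a = a' \<and> b = b'"
proof -
  define G where "G = {x\<in>P. a \<bullet> x = b}"
  have G: "G facet_of P" unfolding G_def by (rule FI_mem(3)[OF ab])
  obtain p where p: "p \<in> G" using FI_facet_ne[OF ab] unfolding G_def by blast
  define D where "D = (\<lambda>x. x - p) ` G"
  have dD: "dim D = CARD('n) - 1" unfolding D_def by (rule facet_dim[OF G p])
  have aD: "\<forall>d\<in>D. a \<bullet> d = 0" using p unfolding D_def G_def by (auto simp: inner_diff_right)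
  have a'D: "\<forall>d\<in>D. a' \<bullet> d = 0" using p eq unfolding D_def G_def by (auto simp: inner_diff_right)
  obtain \<mu> where mu: "a' = \<mu> *\<^sub>R a" using parallel_core[OF FI_a0[OF ab] aD a'D dD] by blast
  have bb: "b' = \<mu> * b" using p eq mu unfolding G_def by auto
  obtain x where x: "x \<in> P" "b < a \<bullet> x" using FI_out[OF ab] by blast
  have "b' \<le> a' \<bullet> x" using FI_mem(2)[OF ab'] x(1) by blast
  then have "\<mu> * b \<le> \<mu> * (a \<bullet> x)" using mu bb by simp
  then have "0 \<le> \<mu> * (a \<bullet> x - b)" by (simp add: right_diff_distrib)
  then have "\<mu> \<ge> 0" using x(2) by (simp add: zero_le_mult_iff)
  moreover have "\<mu> \<noteq> 0" using mu FI_a0[OF ab'] by auto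
  ultimately have "\<mu> > 0" by simp
  then have "\<mu> = 1" using prim_unique[OF FI_mem(1)[OF ab]] FI_mem(1)[OF ab'] mu by simp
  then show ?thesis using mu bb by simp
qed

lemma FI_finite: "finite FI"
proof -
  let ?f = "\<lambda>(a,b). {x\<in>P. a \<bullet> x = b}"
  have "inj_on ?f FI" unfolding inj_on_def using FI_unique by fast
  moreover have "?f ` FI \<subseteq> {F. F facet_of P}" using FI_mem(3) by auto
  then have "finite (?f ` FI)" using finite_polyhedron_facets[OF polyhedron_P] finite_subset by blast
  ultimately show ?thesis using finite_imageD by blast
qed

lemma FI_ne: "FI \<noteq> {}"
proof
  assume "FI = {}"
  then have "P = UNIV" using P_eq by simp
  then show False using compact_P not_bounded_UNIV compact_imp_bounded by metis
qed

lemma PL: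
  assumes ab: "(a,b) \<in> FI" and p: "p \<in> rel_interior {x\<in>P. a \<bullet> x = b}"
    and u: "\<forall>x\<in>P. u \<bullet> p \<le> u \<bullet> x"
  shows "\<exists>c\<ge>0. u = c *\<^sub>R a"
proof -
  define G where "G = {x\<in>P. a \<bullet> x = b}"
  have G: "G facet_of P" unfolding G_def by (rule FI_mem(3)[OF ab])
  have pG: "p \<in> G" using p rel_interior_subset unfolding G_def by blast
  obtain e where e: "e > 0" "ball p e \<inter> affine hull G \<subseteq> G" using p unfolding G_def mem_rel_interior_ball by blast
  define D where "D = (\<lambda>x. x - p) ` G"
  have dD: "dim D = CARD('n) - 1" unfolding D_def by (rule facet_dim[OF G pG])
  have aD: "\<forall>d\<in>D. a \<bullet> d = 0" using pG unfolding D_def G_def by (auto simp: inner_diff_right)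
  have uD: "\<forall>d\<in>D. u \<bullet> d = 0"
  proof
    fix d assume "d \<in> D"
    then obtain g where g: "g \<in> G" "d = g - p" unfolding D_def by blast
    define \<delta> where "\<delta> = e / (2 * (norm d + 1))"
    have dd: "norm d + 1 > 0" using norm_ge_zero[of d] by linarith
    have dpos: "\<delta> > 0" unfolding \<delta>_def using e dd by simp
    have nd: "norm (\<delta> *\<^sub>R d) < e"
    proof -
      have "norm (\<delta> *\<^sub>R d) = \<delta> * norm d" using dpos by simp
      also have "\<dots> < \<delta> * (2 * (norm d + 1))" using dpos dd by (intro mult_strict_left_mono) auto
      also have "\<dots> = e" unfolding \<delta>_def using dd by simp
      finally show ?thesis .
    qed
    have inG: "p + s *\<^sub>R d \<in> G" if s: "\<bar>s\<bar> = \<delta>" for s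
    proof -
      have "p + s *\<^sub>R d = (1 - s) *\<^sub>R p + s *\<^sub>R g" unfolding g(2) by (simp add: algebra_simps)
      moreover have "(1 - s) *\<^sub>R p + s *\<^sub>R g \<in> affine hull G"
        by (intro mem_affine[OF affine_affine_hull]) (auto simp: pG g(1) hull_inc)
      ultimately have "p + s *\<^sub>R d \<in> affine hull G" by simp
      moreover have "p + s *\<^sub>R d \<in> ball p e"
        using nd s by (simp add: dist_norm)
      ultimately show ?thesis using e(2) by blast
    qed
    have "u \<bullet> p \<le> u \<bullet> (p + \<delta> *\<^sub>R d)" using u inG[of \<delta>] dpos unfolding G_def by auto
    then have A: "0 \<le> \<delta> * (u \<bullet> d)" by (simp add: inner_add_right)
    have "u \<bullet> p \<le> u \<bullet> (p + (- \<delta>) *\<^sub>R d)" using u inG[of "-\<delta>"] dpos unfolding G_def by auto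
    then have B: "0 \<le> - (\<delta> * (u \<bullet> d))" by (simp add: inner_add_right inner_diff_right)
    from A B have "\<delta> * (u \<bullet> d) = 0" by linarith
    then show "u \<bullet> d = 0" using dpos by simp
  qed
  obtain c where c: "u = c *\<^sub>R a" using parallel_core[OF FI_a0[OF ab] aD uD dD] by blast
  obtain x where x: "x \<in> P" "b < a \<bullet> x" using FI_out[OF ab] by blast
  have "u \<bullet> p \<le> u \<bullet> x" using u x(1) by blast
  then have "c * b \<le> c * (a \<bullet> x)" using c pG unfolding G_def by simp
  then have "0 \<le> c * (a \<bullet> x - b)" by (simp add: right_diff_distrib)
  then have "c \<ge> 0" using x(2) by (simp add: zero_le_mult_iff)
  then show ?thesis using c by blast
qed

definition "Vt = {v. v extreme_point_of P}"

lemma Vt_fin: "finite Vt" unfolding Vt_def by (rule finite_polyhedron_extreme_points[OF polyhedron_P])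

lemma P_hull: "P = convex hull Vt"
  unfolding Vt_def using Krein_Milman_Minkowski[OF compact_P convex_P] .

lemma Vt_ne: "Vt \<noteq> {}" using P_hull P_ne by auto

lemma Vt_P: "v \<in> Vt \<Longrightarrow> v \<in> P" unfolding Vt_def extreme_point_of_def by blast

lemma Vt_int: "v \<in> Vt \<Longrightarrow> int_vec v"
proof -
  assume v: "v \<in> Vt"
  obtain V where V: "finite V" "V \<noteq> {}" "\<forall>v\<in>V. int_vec v" "P = convex hull V" by (rule V_ex)
  have "v extreme_point_of convex hull V" using v V(4) unfolding Vt_def by simp
  then have "v \<in> V" by (rule extreme_point_of_convex_hull)
  then show ?thesis using V(3) by blast
qed

lemma vspan:
  assumes v: "v \<in> Vt" and z: "\<forall>(a,b)\<in>FI. a \<bullet> v = b \<longrightarrow> a \<bullet> z = 0"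
  shows "z = 0"
proof (rule ccontr)
  assume z0: "z \<noteq> 0"
  define I where "I = {(a,b)\<in>FI. a \<bullet> v \<noteq> b}"
  have finI: "finite I" using FI_finite unfolding I_def by (auto intro: finite_subset)
  have Ipos: "fst i \<bullet> v - snd i > 0" if "i \<in> I" for i
  proof -
    obtain a b where i: "i = (a,b)" by force
    have "(a,b) \<in> FI" "a \<bullet> v \<noteq> b" using that unfolding I_def i by auto
    moreover have "b \<le> a \<bullet> v" using FI_mem(2)[OF \<open>(a,b)\<in>FI\<close>] Vt_P[OF v] by blast
    ultimately show ?thesis unfolding i by simp
  qed
  obtain e where e: "e > 0" "\<forall>i\<in>I. \<forall>e'. 0 \<le> e' \<and> e' \<le> e \<longrightarrow> e' * \<bar>fst i \<bullet> z\<bar> < fst i \<bullet> v - snd i"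
    using ex_small[OF finI, of "\<lambda>i. fst i \<bullet> v - snd i" "\<lambda>i. \<bar>fst i \<bullet> z\<bar>"] Ipos by blast
  have inP: "v + s *\<^sub>R z \<in> P" if s: "\<bar>s\<bar> = e" for s
  proof -
    have "b \<le> a \<bullet> (v + s *\<^sub>R z)" if ab: "(a,b) \<in> FI" for a b
    proof (cases "a \<bullet> v = b")
      case True
      then show ?thesis using z ab by (auto simp: inner_add_right)
    next
      case False
      then have "(a,b) \<in> I" using ab unfolding I_def by blast
      then have "e * \<bar>a \<bullet> z\<bar> < a \<bullet> v - b" using e(2) e(1) by (metis fst_conv snd_conv order_refl less_imp_le)
      moreover have "\<bar>s * (a \<bullet> z)\<bar> = e * \<bar>a \<bullet> z\<bar>" using s by (simp add: abs_mult)
      moreover have "s * (a \<bullet> z) \<ge> - \<bar>s * (a \<bullet> z)\<bar>" by linarith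
      ultimately show ?thesis by (simp add: inner_add_right)
    qed
    then show ?thesis using P_eq by blast
  qed
  have "v \<in> open_segment (v + (- e) *\<^sub>R z) (v + e *\<^sub>R z)"
  proof -
    have "(v + (- e) *\<^sub>R z) + (v + e *\<^sub>R z) = 2 *\<^sub>R v" by (simp add: scaleR_2)
    then have "midpoint (v + (- e) *\<^sub>R z) (v + e *\<^sub>R z) = v" unfolding midpoint_def by simp
    moreover have "v + (- e) *\<^sub>R z \<noteq> v + e *\<^sub>R z"
    proof
      assume "v + (- e) *\<^sub>R z = v + e *\<^sub>R z"
      then have "(- e) *\<^sub>R z = e *\<^sub>R z" by simp
      then have "- e = e \<or> z = 0" by (simp only: scaleR_cancel_right)
      then show False using z0 e(1) by auto
    qed
    ultimately show ?thesis using midpoint_in_open_segment by metis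
  qed
  moreover have "v + (- e) *\<^sub>R z \<in> P" using inP[of "-e"] e(1) by simp
  moreover have "v + e *\<^sub>R z \<in> P" using inP[of e] e(1) by simp
  ultimately show False using v unfolding Vt_def extreme_point_of_def by blast
qed

definition "sgm v = normal_cone P {v}"

lemma sgm_iff: "u \<in> sgm v \<longleftrightarrow> (\<forall>x\<in>P. u \<bullet> v \<le> u \<bullet> x)"
  unfolding sgm_def normal_cone_def by auto

definition "Pt t = {x. \<forall>(a,b)\<in>FI. b + t \<le> a \<bullet> x}"

lemma Pt0: "Pt 0 = P" unfolding Pt_def using P_eq by simp

definition "K t y = {a. \<exists>b. (a,b)\<in>FI \<and> a \<bullet> y = b + t}"

lemma K_fin: "finite (K t y)"
proof -
  have "K t y \<subseteq> fst ` FI" unfolding K_def by force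
  then show ?thesis using FI_finite finite_subset by blast
qed

lemma farkas_Pt:
  assumes y: "y \<in> Pt t" and min: "\<forall>x\<in>Pt t. u \<bullet> y \<le> u \<bullet> x"
  shows "\<exists>l. (\<forall>c\<in>K t y. l c \<ge> 0) \<and> u = (\<Sum>c\<in>K t y. l c *\<^sub>R c)"
proof -
  define A where "A = (\<lambda>(a,b). (a, b + t)) ` FI"
  have finA: "finite A" unfolding A_def using FI_finite by simp
  have eqs: "(\<forall>(c,d)\<in>A. d \<le> c \<bullet> x) \<longleftrightarrow> x \<in> Pt t" for x unfolding A_def Pt_def by auto
  have KK: "{c. \<exists>d. (c,d)\<in>A \<and> c \<bullet> y = d} = K t y" unfolding A_def K_def by auto
  have h1: "\<forall>(c,d)\<in>A. d \<le> c \<bullet> y" using eqs y by blast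
  have h2: "u \<bullet> y \<le> u \<bullet> x" if "\<forall>(c,d)\<in>A. d \<le> c \<bullet> x" for x using eqs min that by blast
  from farkas[OF finA h1 h2] show ?thesis by (simp only: KK)
qed

lemma cone_sum_le:
  assumes "finite C" "\<forall>c\<in>C. l c \<ge> 0" "u = (\<Sum>c\<in>C. l c *\<^sub>R c)" "\<forall>c\<in>C. c \<bullet> y \<le> c \<bullet> x"
  shows "u \<bullet> y \<le> u \<bullet> x"
proof -
  have "u \<bullet> y = (\<Sum>c\<in>C. l c * (c \<bullet> y))" using assms(3) by (simp add: inner_sum_left)
  also have "\<dots> \<le> (\<Sum>c\<in>C. l c * (c \<bullet> x))" using assms(2,4) by (intro sum_mono mult_left_mono) auto
  also have "\<dots> = u \<bullet> x" using assms(3) by (simp add: inner_sum_left)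
  finally show ?thesis .
qed

lemma convex_sgm: "convex (sgm v)"
proof (rule convexI)
  fix x y :: "real^'n" and s t :: real
  assume x: "x \<in> sgm v" and y: "y \<in> sgm v" and st: "0 \<le> s" "0 \<le> t" "s + t = 1"
  show "s *\<^sub>R x + t *\<^sub>R y \<in> sgm v"
    unfolding sgm_iff
  proof
    fix z assume z: "z \<in> P"
    have "s * (x \<bullet> v) \<le> s * (x \<bullet> z)" using x z st by (intro mult_left_mono) (auto simp: sgm_iff)
    moreover have "t * (y \<bullet> v) \<le> t * (y \<bullet> z)" using y z st by (intro mult_left_mono) (auto simp: sgm_iff)
    ultimately show "(s *\<^sub>R x + t *\<^sub>R y) \<bullet> v \<le> (s *\<^sub>R x + t *\<^sub>R y) \<bullet> z" by (simp add: inner_add_left)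
  qed
qed

lemma act_sgm: "(a,b) \<in> FI \<Longrightarrow> a \<bullet> v = b \<Longrightarrow> a \<in> sgm v"
  using FI_mem(2) unfolding sgm_iff by auto

end

context fdlp begin

lemma sgm_in_fan: "v \<in> Vt \<Longrightarrow> sgm v \<in> normal_fan P"
  unfolding normal_fan_def sgm_def Vt_def using face_of_singleton by blast

lemma K0: "K 0 v = {a. \<exists>b. (a,b)\<in>FI \<and> a \<bullet> v = b}" unfolding K_def by simp

lemma ustar_unique:
  assumes v: "v \<in> Vt" and y: "y \<in> P" and le: "(\<Sum>a\<in>K 0 v. a) \<bullet> y \<le> (\<Sum>a\<in>K 0 v. a) \<bullet> v"
  shows "y = v"
proof -
  have nn: "\<forall>a\<in>K 0 v. 0 \<le> a \<bullet> y - a \<bullet> v"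
  proof
    fix a assume "a \<in> K 0 v"
    then obtain b where ab: "(a,b) \<in> FI" "a \<bullet> v = b" unfolding K0 by blast
    then show "0 \<le> a \<bullet> y - a \<bullet> v" using FI_mem(2)[OF ab(1)] y by auto
  qed
  have "(\<Sum>a\<in>K 0 v. a \<bullet> y - a \<bullet> v) = (\<Sum>a\<in>K 0 v. a) \<bullet> y - (\<Sum>a\<in>K 0 v. a) \<bullet> v"
    by (simp only: inner_sum_left sum_subtractf)
  then have "(\<Sum>a\<in>K 0 v. a \<bullet> y - a \<bullet> v) \<le> 0" using le by simp
  moreover have "(\<Sum>a\<in>K 0 v. a \<bullet> y - a \<bullet> v) \<ge> 0" using nn by (intro sum_nonneg) auto
  ultimately have "(\<Sum>a\<in>K 0 v. a \<bullet> y - a \<bullet> v) = 0" by linarith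
  moreover have "(\<Sum>a\<in>K 0 v. a \<bullet> y - a \<bullet> v) = 0 \<longleftrightarrow> (\<forall>a\<in>K 0 v. a \<bullet> y - a \<bullet> v = 0)"
    by (rule sum_nonneg_eq_0_iff[OF K_fin]) (use nn in blast)
  ultimately have z: "\<forall>a\<in>K 0 v. a \<bullet> y - a \<bullet> v = 0" by blast
  have h: "a \<bullet> (y - v) = 0" if "(a,b) \<in> FI" "a \<bullet> v = b" for a b
  proof -
    have "a \<in> K 0 v" unfolding K0 using that by blast
    then show "a \<bullet> (y - v) = 0" using z by (simp add: inner_diff_right)
  qed
  have "y - v = 0" by (rule vspan[OF v]) (use h in blast)
  then show ?thesis by simp
qed

lemma ustar_sgm: "(\<Sum>a\<in>K 0 v. a) \<in> sgm v"
  unfolding sgm_iff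
proof
  fix x assume x: "x \<in> P"
  have "\<forall>a\<in>K 0 v. a \<bullet> v \<le> a \<bullet> x"
  proof
    fix a assume "a \<in> K 0 v"
    then obtain b where ab: "(a,b) \<in> FI" "a \<bullet> v = b" unfolding K0 by blast
    then show "a \<bullet> v \<le> a \<bullet> x" using FI_mem(2)[OF ab(1)] x by auto
  qed
  then show "(\<Sum>a\<in>K 0 v. a) \<bullet> v \<le> (\<Sum>a\<in>K 0 v. a) \<bullet> x"
    by (simp add: inner_sum_left sum_mono)
qed

lemma sgm_max: assumes v: "v \<in> Vt" shows "sgm v \<in> max_cones (normal_fan P)"
  unfolding max_cones_def
proof (clarify, intro conjI ballI impI)
  show "sgm v \<in> normal_fan P" using sgm_in_fan[OF v] .
  fix \<tau> assume "\<tau> \<in> normal_fan P" and sub: "sgm v \<subseteq> \<tau>"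
  then obtain G where G: "G face_of P" "G \<noteq> {}" "\<tau> = normal_cone P G" unfolding normal_fan_def by blast
  have "G \<subseteq> {v}"
  proof
    fix y assume y: "y \<in> G"
    have yP: "y \<in> P" using y G(1) face_of_imp_subset by blast
    have "(\<Sum>a\<in>K 0 v. a) \<in> \<tau>" using ustar_sgm sub by blast
    then have "(\<Sum>a\<in>K 0 v. a) \<bullet> y \<le> (\<Sum>a\<in>K 0 v. a) \<bullet> v"
      using G(3) y Vt_P[OF v] unfolding normal_cone_def by blast
    then show "y \<in> {v}" using ustar_unique[OF v yP] by simp
  qed
  then have "G = {v}" using G(2) by blast
  then show "\<tau> = sgm v" using G(3) unfolding sgm_def by simp
qed

lemma max_is_sgm:
  assumes s: "\<sigma> \<in> max_cones (normal_fan P)" shows "\<exists>v\<in>Vt. \<sigma> = sgm v"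
proof -
  have sf: "\<sigma> \<in> normal_fan P" and mx: "\<forall>\<tau>\<in>normal_fan P. \<sigma> \<subseteq> \<tau> \<longrightarrow> \<tau> = \<sigma>"
    using s unfolding max_cones_def by auto
  obtain G where G: "G face_of P" "G \<noteq> {}" "\<sigma> = normal_cone P G" using sf unfolding normal_fan_def by blast
  have "compact G" using face_of_imp_compact[OF convex_P compact_P G(1)] .
  moreover have "convex G" using G(1) by (rule face_of_imp_convex)
  ultimately obtain v where v: "v extreme_point_of G" using extreme_point_exists_convex G(2) by blast
  have vV: "v \<in> Vt" using v extreme_point_of_face[OF G(1)] unfolding Vt_def by blast
  have vG: "v \<in> G" using v unfolding extreme_point_of_def by blast
  have "\<sigma> \<subseteq> sgm v" using G(3) vG unfolding sgm_def normal_cone_def by blast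
  then have "sgm v = \<sigma>" using mx sgm_in_fan[OF vV] by blast
  then show ?thesis using vV by blast
qed

lemma ray_in:
  assumes v: "v \<in> Vt" and ab: "(a,b) \<in> FI" and av: "a \<bullet> v = b"
  shows "a \<in> ray_gens (sgm v)"
  unfolding ray_gens_def
proof (intro CollectI conjI)
  show "primitive_vec a" using FI_mem(1)[OF ab] .
  define G where "G = {x\<in>P. a \<bullet> x = b}"
  have "G \<noteq> {}" unfolding G_def by (rule FI_facet_ne[OF ab])
  moreover have "convex G" unfolding G_def using FI_mem(3)[OF ab] facet_of_imp_face_of face_of_imp_convex by blast
  ultimately obtain p where p: "p \<in> rel_interior G" using rel_interior_eq_empty by blast
  have pG: "p \<in> G" using p rel_interior_subset by blast
  have pP: "p \<in> P" and ap: "a \<bullet> p = b" using pG unfolding G_def by auto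
  have ge: "(p - v) \<bullet> u \<ge> 0" if "u \<in> sgm v" for u
  proof -
    have "u \<bullet> v \<le> u \<bullet> p" using pP that unfolding sgm_iff by blast
    moreover have "(p - v) \<bullet> u = u \<bullet> p - u \<bullet> v" by (simp only: inner_diff_left inner_commute[of p u] inner_commute[of v u])
    ultimately show ?thesis by simp
  qed
  have "{c *\<^sub>R a |c. c \<ge> 0} = sgm v \<inter> {u. (p - v) \<bullet> u = 0}"
  proof
    show "{c *\<^sub>R a |c. c \<ge> 0} \<subseteq> sgm v \<inter> {u. (p - v) \<bullet> u = 0}"
    proof clarify
      fix c :: real assume c: "c \<ge> 0"
      have "c *\<^sub>R a \<in> sgm v" unfolding sgm_iff
      proof
        fix x assume "x \<in> P"
        then have "a \<bullet> v \<le> a \<bullet> x" using FI_mem(2)[OF ab] av by auto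
        then show "c *\<^sub>R a \<bullet> v \<le> c *\<^sub>R a \<bullet> x" using c by (simp add: mult_left_mono)
      qed
      moreover have "(p - v) \<bullet> (c *\<^sub>R a) = 0" using ap av by (simp add: inner_diff_left inner_diff_right inner_commute)
      ultimately show "c *\<^sub>R a \<in> sgm v \<inter> {u. (p - v) \<bullet> u = 0}" by blast
    qed
    show "sgm v \<inter> {u. (p - v) \<bullet> u = 0} \<subseteq> {c *\<^sub>R a |c. c \<ge> 0}"
    proof
      fix u assume u: "u \<in> sgm v \<inter> {u. (p - v) \<bullet> u = 0}"
      have us: "\<forall>x\<in>P. u \<bullet> v \<le> u \<bullet> x" using u sgm_iff by blast
      have u0: "(p - v) \<bullet> u = 0" using u by blast
      have "\<forall>x\<in>P. u \<bullet> p \<le> u \<bullet> x"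
      proof
        fix x assume "x \<in> P"
        then have "u \<bullet> v \<le> u \<bullet> x" using us by blast
        moreover have "(p - v) \<bullet> u = u \<bullet> p - u \<bullet> v" by (simp only: inner_diff_left inner_commute[of p u] inner_commute[of v u])
        then have "u \<bullet> p = u \<bullet> v" using u0 by simp
        ultimately show "u \<bullet> p \<le> u \<bullet> x" by simp
      qed
      then obtain c where "c \<ge> 0" "u = c *\<^sub>R a" using PL[OF ab _] p unfolding G_def by blast
      then show "u \<in> {c *\<^sub>R a |c. c \<ge> 0}" by blast
    qed
  qed
  moreover have "(sgm v \<inter> {u. (p - v) \<bullet> u = 0}) face_of sgm v"
    by (rule face_of_Int_supporting_hyperplane_ge[OF convex_sgm]) (use ge in auto)
  ultimately show "{c *\<^sub>R a |c. c \<ge> 0} face_of sgm v" by simp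
qed

lemma QG_unique:
  assumes v: "v \<in> Vt" and q1: "QGor_cone (sgm v) r1" and q2: "QGor_cone (sgm v) r2"
  shows "r1 = r2"
proof -
  obtain u1 where u1: "primitive_vec u1" "\<forall>w\<in>ray_gens (sgm v). w \<bullet> u1 = real r1" and r1: "r1 > 0"
    using q1 unfolding QGor_cone_def by blast
  obtain u2 where u2: "primitive_vec u2" "\<forall>w\<in>ray_gens (sgm v). w \<bullet> u2 = real r2" and r2: "r2 > 0"
    using q2 unfolding QGor_cone_def by blast
  have h: "a \<bullet> (real r2 *\<^sub>R u1 - real r1 *\<^sub>R u2) = 0" if "(a,b) \<in> FI" "a \<bullet> v = b" for a b
  proof -
    have "a \<in> ray_gens (sgm v)" by (rule ray_in[OF v that])
    then show ?thesis using u1(2) u2(2) by (simp add: inner_diff_right)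
  qed
  have "real r2 *\<^sub>R u1 - real r1 *\<^sub>R u2 = 0" by (rule vspan[OF v]) (use h in blast)
  then have eq: "real r1 *\<^sub>R u2 = real r2 *\<^sub>R u1" by simp
  have "u2 = (1 / real r1) *\<^sub>R (real r1 *\<^sub>R u2)" using r1 by simp
  also have "\<dots> = (1 / real r1) *\<^sub>R (real r2 *\<^sub>R u1)" using eq by simp
  also have "\<dots> = (real r2 / real r1) *\<^sub>R u1" by simp
  finally have u2e: "u2 = (real r2 / real r1) *\<^sub>R u1" .
  have pos: "real r2 / real r1 > 0" using r1 r2 by simp
  have pr: "primitive_vec ((real r2 / real r1) *\<^sub>R u1)" using u2(1) u2e by simp
  have "real r2 / real r1 = 1" by (rule prim_unique[OF u1(1) pr pos])
  then have "real r2 = real r1" using r1 by (simp add: divide_eq_1_iff)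
  then show ?thesis by simp
qed

lemma QG_main:
  assumes Q: "QGor_fan (normal_fan P) r"
  shows "r > 0 \<and> (\<forall>v\<in>Vt. \<exists>w. (\<forall>(a,b)\<in>FI. a \<bullet> v = b \<longrightarrow> a \<bullet> w = 1) \<and> int_vec (real r *\<^sub>R w))"
proof -
  have ex: "\<forall>\<sigma>\<in>max_cones (normal_fan P). \<exists>r\<sigma>. QGor_cone \<sigma> r\<sigma>" and rL: "r = Lcm (gor_index ` max_cones (normal_fan P))"
    using Q unfolding QGor_fan_def by auto
  have gi: "QGor_cone \<sigma> (gor_index \<sigma>)" if s: "\<sigma> \<in> max_cones (normal_fan P)" for \<sigma>
  proof -
    obtain v where v: "v \<in> Vt" "\<sigma> = sgm v" using max_is_sgm[OF s] by blast
    obtain r\<sigma> where rs: "QGor_cone \<sigma> r\<sigma>" using ex s by blast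
    have "gor_index \<sigma> = r\<sigma>" unfolding gor_index_def
    proof (rule the_equality[where P = "\<lambda>r. QGor_cone \<sigma> r", OF rs])
      fix r' assume "QGor_cone \<sigma> r'"
      then have "QGor_cone (sgm v) r'" "QGor_cone (sgm v) r\<sigma>" using rs v(2) by simp_all
      then show "r' = r\<sigma>" by (rule QG_unique[OF v(1)])
    qed
    then show ?thesis using rs by simp
  qed
  have finF: "finite (normal_fan P)"
  proof -
    have "normal_fan P \<subseteq> (\<lambda>F. normal_cone P F) ` {F. F face_of P}" unfolding normal_fan_def by blast
    moreover have "finite {F. F face_of P}" by (rule finite_polyhedron_faces[OF polyhedron_P])
    ultimately show ?thesis using finite_subset by blast
  qed
  have finM: "finite (max_cones (normal_fan P))"
    using finF unfolding max_cones_def by simp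
  have "0 \<notin> gor_index ` max_cones (normal_fan P)"
  proof
    assume "0 \<in> gor_index ` max_cones (normal_fan P)"
    then obtain \<sigma> where "\<sigma> \<in> max_cones (normal_fan P)" "0 = gor_index \<sigma>" unfolding image_iff by blast
    then have "QGor_cone \<sigma> 0" using gi[of \<sigma>] by simp
    then show False unfolding QGor_cone_def by simp
  qed
  then have "Lcm (gor_index ` max_cones (normal_fan P)) \<noteq> 0" using finM by (simp add: Lcm_0_iff)
  then have r0: "r > 0" using rL by simp
  have "\<exists>w. (\<forall>(a,b)\<in>FI. a \<bullet> v = b \<longrightarrow> a \<bullet> w = 1) \<and> int_vec (real r *\<^sub>R w)" if v: "v \<in> Vt" for v
  proof -
    have sm: "sgm v \<in> max_cones (normal_fan P)" by (rule sgm_max[OF v])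
    define rv where "rv = gor_index (sgm v)"
    obtain u where u: "primitive_vec u" "\<forall>w\<in>ray_gens (sgm v). w \<bullet> u = real rv" and rv: "rv > 0"
      using gi[OF sm] unfolding QGor_cone_def rv_def by blast
    have "rv dvd r" unfolding rL rv_def using sm by (intro dvd_Lcm) simp
    then obtain q where q: "r = rv * q" by (rule dvdE)
    define w where "w = (1 / real rv) *\<^sub>R u"
    have h: "a \<bullet> w = 1" if "(a,b) \<in> FI" "a \<bullet> v = b" for a b
    proof -
      have "a \<in> ray_gens (sgm v)" by (rule ray_in[OF v that])
      then show "a \<bullet> w = 1" unfolding w_def using u(2) rv by simp
    qed
    have "\<forall>(a,b)\<in>FI. a \<bullet> v = b \<longrightarrow> a \<bullet> w = 1" using h by blast
    moreover have "real r *\<^sub>R w = real q *\<^sub>R u" unfolding w_def q using rv by simp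
    moreover have "int_vec (real q *\<^sub>R u)" using u(1) unfolding primitive_vec_def int_vec_def
      by (simp add: Ints_mult)
    ultimately show ?thesis by (intro exI[of _ w]) simp
  qed
  then show ?thesis using r0 by blast
qed

end

definition argmn :: "(real^'n) set \<Rightarrow> real^'n \<Rightarrow> (real^'n) set" where
  "argmn Q u = {y\<in>Q. \<forall>x\<in>Q. u \<bullet> y \<le> u \<bullet> x}"

lemma argmn_face:
  fixes Q :: "(real^'n) set"
  assumes "compact Q" "convex Q" "Q \<noteq> {}"
  shows "argmn Q u face_of Q"
proof -
  have "continuous_on Q (\<lambda>x. u \<bullet> x)" by (intro continuous_intros)
  then obtain y0 where y0: "y0 \<in> Q" "\<forall>x\<in>Q. u \<bullet> y0 \<le> u \<bullet> x"
    using continuous_attains_inf[OF assms(1) assms(3)] by blast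
  have "argmn Q u = Q \<inter> {x. u \<bullet> x = u \<bullet> y0}"
    unfolding argmn_def using y0 by (auto intro: order_antisym)
  moreover have "(Q \<inter> {x. u \<bullet> x = u \<bullet> y0}) face_of Q"
    by (rule face_of_Int_supporting_hyperplane_ge[OF assms(2)]) (use y0 in auto)
  ultimately show ?thesis by simp
qed

lemma nc_argmn: "F \<subseteq> Q \<Longrightarrow> normal_cone Q F = {u. F \<subseteq> argmn Q u}"
  unfolding normal_cone_def argmn_def by auto

lemma fan_char:
  fixes Q :: "(real^'n) set"
  assumes cQ: "compact Q" and vQ: "convex Q"
  shows "normal_fan Q = {{u. \<forall>y\<in>W. u \<in> normal_cone Q {y}} | W. W \<subseteq> {y. y extreme_point_of Q} \<and> W \<noteq> {}}"
proof
  show "normal_fan Q \<subseteq> {{u. \<forall>y\<in>W. u \<in> normal_cone Q {y}} | W. W \<subseteq> {y. y extreme_point_of Q} \<and> W \<noteq> {}}"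
  proof
    fix \<sigma> assume "\<sigma> \<in> normal_fan Q"
    then obtain F where F: "F face_of Q" "F \<noteq> {}" "\<sigma> = normal_cone Q F" unfolding normal_fan_def by blast
    define W where "W = {y. y extreme_point_of F}"
    have FQ: "F \<subseteq> Q" using F(1) by (rule face_of_imp_subset)
    have Qne: "Q \<noteq> {}" using F(2) FQ by blast
    have cF: "compact F" by (rule face_of_imp_compact[OF vQ cQ F(1)])
    have vF: "convex F" using F(1) by (rule face_of_imp_convex)
    have WE: "W \<subseteq> {y. y extreme_point_of Q}" unfolding W_def using extreme_point_of_face[OF F(1)] by blast
    obtain y1 where "y1 extreme_point_of F" using extreme_point_exists_convex[OF cF vF F(2)] by blast
    then have Wne: "W \<noteq> {}" unfolding W_def by blast
    have FW: "F = convex hull W" unfolding W_def by (rule Krein_Milman_Minkowski[OF cF vF])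
    have WF: "W \<subseteq> F" unfolding W_def extreme_point_of_def by blast
    have "\<sigma> = {u. \<forall>y\<in>W. u \<in> normal_cone Q {y}}"
    proof -
      have "u \<in> \<sigma> \<longleftrightarrow> (\<forall>y\<in>W. u \<in> normal_cone Q {y})" for u
      proof
        assume "u \<in> \<sigma>"
        then show "\<forall>y\<in>W. u \<in> normal_cone Q {y}" using F(3) WF unfolding normal_cone_def by blast
      next
        assume a: "\<forall>y\<in>W. u \<in> normal_cone Q {y}"
        have "W \<subseteq> argmn Q u"
        proof
          fix y assume "y \<in> W"
          then have "u \<in> normal_cone Q {y}" "y \<in> Q" using a WF FQ by auto
          then show "y \<in> argmn Q u" unfolding normal_cone_def argmn_def by auto
        qed
        moreover have "convex (argmn Q u)" using argmn_face[OF cQ vQ Qne] by (rule face_of_imp_convex)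
        ultimately have "convex hull W \<subseteq> argmn Q u" by (rule hull_minimal)
        then have "F \<subseteq> argmn Q u" using FW by simp
        then show "u \<in> \<sigma>" using F(3) nc_argmn[OF FQ] by simp
      qed
      then show ?thesis by blast
    qed
    then show "\<sigma> \<in> {{u. \<forall>y\<in>W. u \<in> normal_cone Q {y}} | W. W \<subseteq> {y. y extreme_point_of Q} \<and> W \<noteq> {}}"
      using WE Wne by blast
  qed
  show "{{u. \<forall>y\<in>W. u \<in> normal_cone Q {y}} | W. W \<subseteq> {y. y extreme_point_of Q} \<and> W \<noteq> {}} \<subseteq> normal_fan Q"
  proof
    fix \<sigma> assume "\<sigma> \<in> {{u. \<forall>y\<in>W. u \<in> normal_cone Q {y}} | W. W \<subseteq> {y. y extreme_point_of Q} \<and> W \<noteq> {}}"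
    then obtain W where W: "W \<subseteq> {y. y extreme_point_of Q}" "W \<noteq> {}" "\<sigma> = {u. \<forall>y\<in>W. u \<in> normal_cone Q {y}}" by blast
    have WQ: "W \<subseteq> Q" using W(1) unfolding extreme_point_of_def by blast
    have Qne: "Q \<noteq> {}" using WQ W(2) by blast
    define G where "G = \<Inter>{F. F face_of Q \<and> W \<subseteq> F}"
    have fam: "{F. F face_of Q \<and> W \<subseteq> F} \<noteq> {}" using face_of_refl[OF vQ] WQ by blast
    have Gf: "G face_of Q" unfolding G_def by (rule face_of_Inter[OF fam]) blast
    have WG: "W \<subseteq> G" unfolding G_def by blast
    have GQ: "G \<subseteq> Q" using Gf by (rule face_of_imp_subset)
    have "normal_cone Q G = \<sigma>"
    proof -
      have "u \<in> normal_cone Q G \<longleftrightarrow> (\<forall>y\<in>W. u \<in> normal_cone Q {y})" for u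
      proof
        assume "u \<in> normal_cone Q G"
        then show "\<forall>y\<in>W. u \<in> normal_cone Q {y}" using WG unfolding normal_cone_def by blast
      next
        assume a: "\<forall>y\<in>W. u \<in> normal_cone Q {y}"
        have "W \<subseteq> argmn Q u"
        proof
          fix y assume "y \<in> W"
          then have "u \<in> normal_cone Q {y}" "y \<in> Q" using a WQ by auto
          then show "y \<in> argmn Q u" unfolding normal_cone_def argmn_def by auto
        qed
        moreover have "argmn Q u face_of Q" by (rule argmn_face[OF cQ vQ Qne])
        ultimately have "G \<subseteq> argmn Q u" unfolding G_def by blast
        then show "u \<in> normal_cone Q G" using nc_argmn[OF GQ] by simp
      qed
      then show ?thesis using W(3) by blast
    qed
    moreover have "G \<noteq> {}" using WG W(2) by blast
    ultimately show "\<sigma> \<in> normal_fan Q" using Gf unfolding normal_fan_def by blast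
  qed
qed

lemma fan_transfer:
  fixes Q1 Q2 :: "(real^'n) set"
  assumes c1: "compact Q1" "convex Q1" and c2: "compact Q2" "convex Q2"
    and E: "{y. y extreme_point_of Q2} = f ` {y. y extreme_point_of Q1}"
    and N: "\<And>y. y extreme_point_of Q1 \<Longrightarrow> normal_cone Q2 {f y} = normal_cone Q1 {y}"
  shows "normal_fan Q2 = normal_fan Q1"
proof -
  let ?E1 = "{y. y extreme_point_of Q1}"
  have "{{u. \<forall>y\<in>W. u \<in> normal_cone Q2 {y}} | W. W \<subseteq> {y. y extreme_point_of Q2} \<and> W \<noteq> {}}
      = {{u. \<forall>y\<in>W. u \<in> normal_cone Q1 {y}} | W. W \<subseteq> ?E1 \<and> W \<noteq> {}}"
  proof
    show "{{u. \<forall>y\<in>W. u \<in> normal_cone Q2 {y}} | W. W \<subseteq> {y. y extreme_point_of Q2} \<and> W \<noteq> {}}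
      \<subseteq> {{u. \<forall>y\<in>W. u \<in> normal_cone Q1 {y}} | W. W \<subseteq> ?E1 \<and> W \<noteq> {}}"
    proof clarify
      fix W2 assume W2: "W2 \<subseteq> {y. y extreme_point_of Q2}" "W2 \<noteq> {}"
      define W1 where "W1 = {y\<in>?E1. f y \<in> W2}"
      have W2eq: "W2 = f ` W1"
      proof
        show "W2 \<subseteq> f ` W1"
        proof
          fix y assume y: "y \<in> W2"
          then have "y \<in> f ` ?E1" using W2(1) E by blast
          then obtain x where x: "x \<in> ?E1" "y = f x" by (rule imageE)
          then show "y \<in> f ` W1" using y unfolding W1_def by blast
        qed
        show "f ` W1 \<subseteq> W2" unfolding W1_def by blast
      qed
      have "W1 \<noteq> {}" using W2(2) W2eq by blast
      moreover have "{u. \<forall>y\<in>W2. u \<in> normal_cone Q2 {y}} = {u. \<forall>y\<in>W1. u \<in> normal_cone Q1 {y}}"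
        unfolding W2eq using N unfolding W1_def by auto
      moreover have "W1 \<subseteq> ?E1" unfolding W1_def by blast
      ultimately show "\<exists>W. {u. \<forall>y\<in>W2. u \<in> normal_cone Q2 {y}} = {u. \<forall>y\<in>W. u \<in> normal_cone Q1 {y}} \<and> W \<subseteq> ?E1 \<and> W \<noteq> {}"
        by blast
    qed
    show "{{u. \<forall>y\<in>W. u \<in> normal_cone Q1 {y}} | W. W \<subseteq> ?E1 \<and> W \<noteq> {}}
      \<subseteq> {{u. \<forall>y\<in>W. u \<in> normal_cone Q2 {y}} | W. W \<subseteq> {y. y extreme_point_of Q2} \<and> W \<noteq> {}}"
    proof clarify
      fix W1 assume W1: "W1 \<subseteq> ?E1" "W1 \<noteq> {}"
      have "f ` W1 \<subseteq> {y. y extreme_point_of Q2}" using W1(1) E by blast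
      moreover have "f ` W1 \<noteq> {}" using W1(2) by blast
      moreover have "{u. \<forall>y\<in>W1. u \<in> normal_cone Q1 {y}} = {u. \<forall>y\<in>f ` W1. u \<in> normal_cone Q2 {y}}"
        using N W1(1) by auto
      ultimately show "\<exists>W. {u. \<forall>y\<in>W1. u \<in> normal_cone Q1 {y}} = {u. \<forall>y\<in>W. u \<in> normal_cone Q2 {y}} \<and> W \<subseteq> {y. y extreme_point_of Q2} \<and> W \<noteq> {}"
        by blast
    qed
  qed
  then show ?thesis using fan_char[OF c1] fan_char[OF c2] by simp
qed


context fdlp begin

lemma Pt_Inter: "Pt t = (\<Inter>p\<in>FI. {x. fst p \<bullet> x \<ge> snd p + t})"
  unfolding Pt_def by fastforce

lemma convex_Pt: "convex (Pt t)"
  unfolding Pt_Inter by (intro convex_INT) (simp add: convex_halfspace_ge)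

lemma closed_Pt: "closed (Pt t)"
  unfolding Pt_Inter by (intro closed_INT) (simp add: closed_halfspace_ge)

lemma Pt_sub: "t \<ge> 0 \<Longrightarrow> Pt t \<subseteq> P"
  unfolding Pt_def using P_eq by force

lemma compact_Pt: "t \<ge> 0 \<Longrightarrow> compact (Pt t)"
  using Pt_sub compact_P closed_Pt compact_eq_bounded_closed bounded_subset by metis

lemma inner_par_eq: "inner_par P t = Pt t"
proof -
  have fin: "finite ((\<lambda>(a, b). a \<bullet> x - b) ` FI)" for x using FI_finite by simp
  have ne: "((\<lambda>(a, b). a \<bullet> x - b) ` FI) \<noteq> {}" for x using FI_ne by simp
  have "lattice_dist P x \<ge> t \<longleftrightarrow> (\<forall>(a,b)\<in>FI. t \<le> a \<bullet> x - b)" for x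
    unfolding lattice_dist_def FI_def[symmetric] using Min_ge_iff[OF fin ne] by auto
  then show ?thesis unfolding inner_par_def Pt_def by auto
qed

end

locale fdlpw = fdlp P for P :: "(real^'n) set" +
  fixes w :: "real^'n \<Rightarrow> real^'n"
  assumes W: "\<And>v a b. v \<in> Vt \<Longrightarrow> (a,b) \<in> FI \<Longrightarrow> a \<bullet> v = b \<Longrightarrow> a \<bullet> w v = 1"
begin

definition "xt t v = v + t *\<^sub>R w v"

lemma act_xt: "v \<in> Vt \<Longrightarrow> (a,b) \<in> FI \<Longrightarrow> a \<bullet> v = b \<Longrightarrow> a \<bullet> xt t v = b + t"
  unfolding xt_def using W by (simp add: inner_add_right)

lemma K0_xt:
  assumes v: "v \<in> Vt" and c: "c \<in> K 0 v" and y: "y \<in> Pt t"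
  shows "c \<bullet> xt t v \<le> c \<bullet> y"
proof -
  obtain b where cb: "(c,b) \<in> FI" "c \<bullet> v = b" using c unfolding K0 by blast
  then have "c \<bullet> xt t v = b + t" by (rule act_xt[OF v])
  moreover have "b + t \<le> c \<bullet> y" using y cb(1) unfolding Pt_def by blast
  ultimately show ?thesis by simp
qed

lemma sgm_farkas:
  assumes v: "v \<in> Vt" and u: "u \<in> sgm v"
  shows "\<exists>l. (\<forall>c\<in>K 0 v. l c \<ge> 0) \<and> u = (\<Sum>c\<in>K 0 v. l c *\<^sub>R c)"
proof (rule farkas_Pt)
  show "v \<in> Pt 0" using Vt_P[OF v] Pt0 by simp
  show "\<forall>x\<in>Pt 0. u \<bullet> v \<le> u \<bullet> x" using u Pt0 unfolding sgm_iff by simp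
qed

lemma G_nc_sup:
  assumes v: "v \<in> Vt" shows "sgm v \<subseteq> normal_cone (Pt t) {xt t v}"
proof
  fix u assume u: "u \<in> sgm v"
  obtain l where l: "\<forall>c\<in>K 0 v. l c \<ge> 0" "u = (\<Sum>c\<in>K 0 v. l c *\<^sub>R c)" using sgm_farkas[OF v u] by blast
  have "u \<bullet> xt t v \<le> u \<bullet> y" if y: "y \<in> Pt t" for y
    by (rule cone_sum_le[OF K_fin l]) (use K0_xt[OF v _ y] in blast)
  then show "u \<in> normal_cone (Pt t) {xt t v}" unfolding normal_cone_def by blast
qed

lemma G_conv:
  assumes H: "\<forall>v\<in>Vt. xt t v \<in> Pt t"
  shows "Pt t = convex hull (xt t ` Vt)"
proof
  show "convex hull (xt t ` Vt) \<subseteq> Pt t" using H convex_Pt by (intro hull_minimal) auto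
  show "Pt t \<subseteq> convex hull (xt t ` Vt)"
  proof
    fix y assume y: "y \<in> Pt t"
    show "y \<in> convex hull (xt t ` Vt)"
    proof (rule ccontr)
      assume yn: "y \<notin> convex hull (xt t ` Vt)"
      have cl: "closed (convex hull (xt t ` Vt))"
        using Vt_fin by (intro compact_imp_closed finite_imp_compact_convex_hull) simp
      obtain z \<beta> where z: "z \<bullet> y < \<beta>" "\<forall>k\<in>convex hull (xt t ` Vt). z \<bullet> k > \<beta>"
        using separating_hyperplane_closed_point[OF convex_convex_hull cl yn] by blast
      have "continuous_on Vt (\<lambda>x. z \<bullet> x)" by (intro continuous_intros)
      then obtain v where v: "v \<in> Vt" "\<forall>v'\<in>Vt. z \<bullet> v \<le> z \<bullet> v'"
        using continuous_attains_inf[OF finite_imp_compact[OF Vt_fin] Vt_ne] by blast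
      have "Vt \<subseteq> {x. z \<bullet> x \<ge> z \<bullet> v}" using v by auto
      then have "convex hull Vt \<subseteq> {x. z \<bullet> x \<ge> z \<bullet> v}" by (rule hull_minimal) (rule convex_halfspace_ge)
      then have "z \<in> sgm v" unfolding sgm_iff using P_hull by auto
      then have "z \<in> normal_cone (Pt t) {xt t v}" using G_nc_sup[OF v(1)] by blast
      then have "z \<bullet> xt t v \<le> z \<bullet> y" using y unfolding normal_cone_def by blast
      moreover have "xt t v \<in> convex hull (xt t ` Vt)" using v(1) by (intro hull_inc) simp
      then have "z \<bullet> xt t v > \<beta>" using z(2) by blast
      ultimately show False using z(1) by simp
    qed
  qed
qed

lemma G_ext:
  assumes H: "\<forall>v\<in>Vt. xt t v \<in> Pt t"
  shows "{y. y extreme_point_of Pt t} = xt t ` Vt"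
proof
  show "{y. y extreme_point_of Pt t} \<subseteq> xt t ` Vt"
    using G_conv[OF H] extreme_point_of_convex_hull by fastforce
  show "xt t ` Vt \<subseteq> {y. y extreme_point_of Pt t}"
  proof clarify
    fix v assume v: "v \<in> Vt"
    show "xt t v extreme_point_of Pt t"
      unfolding extreme_point_of_def
    proof (intro conjI ballI)
      show "xt t v \<in> Pt t" using H v by blast
      fix y1 y2 assume y1: "y1 \<in> Pt t" and y2: "y2 \<in> Pt t"
      show "xt t v \<notin> open_segment y1 y2"
      proof
        assume "xt t v \<in> open_segment y1 y2"
        then obtain \<mu> where ne: "y1 \<noteq> y2" and mu: "0 < \<mu>" "\<mu> < 1" "xt t v = (1 - \<mu>) *\<^sub>R y1 + \<mu> *\<^sub>R y2"
          unfolding in_segment by blast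
        have h: "a \<bullet> (y1 - y2) = 0" if ab: "(a,b) \<in> FI" "a \<bullet> v = b" for a b
        proof -
          have e: "a \<bullet> xt t v = b + t" by (rule act_xt[OF v ab])
          have A: "a \<bullet> y1 - (b + t) \<ge> 0" "a \<bullet> y2 - (b + t) \<ge> 0" using y1 y2 ab(1) unfolding Pt_def by auto
          have "(1 - \<mu>) * (a \<bullet> y1) + \<mu> * (a \<bullet> y2) = b + t" using e mu(3) by (simp add: inner_add_right)
          then have s: "(1 - \<mu>) * (a \<bullet> y1 - (b + t)) + \<mu> * (a \<bullet> y2 - (b + t)) = 0" by (simp add: algebra_simps)
          have p1: "(1 - \<mu>) * (a \<bullet> y1 - (b + t)) \<ge> 0" using A mu by simp
          have p2: "\<mu> * (a \<bullet> y2 - (b + t)) \<ge> 0" using A mu by simp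
          have "(1 - \<mu>) * (a \<bullet> y1 - (b + t)) = 0" using s p1 p2 by linarith
          then have "a \<bullet> y1 = b + t" using mu by simp
          moreover have "\<mu> * (a \<bullet> y2 - (b + t)) = 0" using s p1 p2 by linarith
          then have "a \<bullet> y2 = b + t" using mu by simp
          ultimately show ?thesis by (simp add: inner_diff_right)
        qed
        have "y1 - y2 = 0" by (rule vspan[OF v]) (use h in blast)
        then show False using ne by simp
      qed
    qed
  qed
qed

lemma G_nc_eq:
  assumes S: "\<forall>v\<in>Vt. \<forall>(a,b)\<in>FI. a \<bullet> v \<noteq> b \<longrightarrow> b + t < a \<bullet> xt t v" and v: "v \<in> Vt"
  shows "normal_cone (Pt t) {xt t v} = sgm v"
proof
  show "sgm v \<subseteq> normal_cone (Pt t) {xt t v}" by (rule G_nc_sup[OF v])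
  show "normal_cone (Pt t) {xt t v} \<subseteq> sgm v"
  proof
    fix u assume u: "u \<in> normal_cone (Pt t) {xt t v}"
    have umin: "u \<bullet> xt t v \<le> u \<bullet> y" if "y \<in> Pt t" for y using u that unfolding normal_cone_def by blast
    show "u \<in> sgm v" unfolding sgm_iff
    proof
      fix x assume x: "x \<in> P"
      define z where "z = x - v"
      define I where "I = {(a,b)\<in>FI. a \<bullet> v \<noteq> b}"
      have finI: "finite I" using FI_finite unfolding I_def by (auto intro: finite_subset)
      have Ipos: "fst i \<bullet> xt t v - (snd i + t) > 0" if "i \<in> I" for i
      proof -
        obtain a b where i: "i = (a,b)" by force
        have "(a,b) \<in> FI" "a \<bullet> v \<noteq> b" using that unfolding I_def i by auto
        have "\<forall>(a,b)\<in>FI. a \<bullet> v \<noteq> b \<longrightarrow> b + t < a \<bullet> xt t v" by (rule bspec[OF S v])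
        from bspec[OF this \<open>(a,b)\<in>FI\<close>] have "b + t < a \<bullet> xt t v" using \<open>a \<bullet> v \<noteq> b\<close> by simp
        then show ?thesis unfolding i by simp
      qed
      obtain e where e: "e > 0" "\<forall>i\<in>I. \<forall>e'. 0 \<le> e' \<and> e' \<le> e \<longrightarrow> e' * (- (fst i \<bullet> z)) < fst i \<bullet> xt t v - (snd i + t)"
        using ex_small[OF finI, of "\<lambda>i. fst i \<bullet> xt t v - (snd i + t)" "\<lambda>i. - (fst i \<bullet> z)"] Ipos by blast
      have inPt: "xt t v + e *\<^sub>R z \<in> Pt t"
        unfolding Pt_def
      proof (clarify)
        fix a b assume ab: "(a,b) \<in> FI"
        show "b + t \<le> a \<bullet> (xt t v + e *\<^sub>R z)"
        proof (cases "a \<bullet> v = b")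
          case True
          have "a \<bullet> xt t v = b + t" by (rule act_xt[OF v ab True])
          moreover have "a \<bullet> z \<ge> 0" using FI_mem(2)[OF ab] x True unfolding z_def by (auto simp: inner_diff_right)
          ultimately show ?thesis using e(1) by (simp add: inner_add_right)
        next
          case False
          then have "(a,b) \<in> I" using ab unfolding I_def by blast
          then have "e * (- (a \<bullet> z)) < a \<bullet> xt t v - (b + t)" using e by (metis fst_conv snd_conv order_refl less_imp_le)
          then show ?thesis by (simp add: inner_add_right)
        qed
      qed
      have "u \<bullet> xt t v \<le> u \<bullet> (xt t v + e *\<^sub>R z)" by (rule umin[OF inPt])
      then have "0 \<le> e * (u \<bullet> z)" by (simp add: inner_add_right)
      then have "0 \<le> u \<bullet> z" using e(1) by (simp add: zero_le_mult_iff)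
      then show "u \<bullet> v \<le> u \<bullet> x" unfolding z_def by (simp add: inner_diff_right)
    qed
  qed
qed

lemma S_imp_H:
  assumes S: "\<forall>v\<in>Vt. \<forall>(a,b)\<in>FI. a \<bullet> v \<noteq> b \<longrightarrow> b + t < a \<bullet> xt t v"
  shows "\<forall>v\<in>Vt. xt t v \<in> Pt t"
proof
  fix v assume v: "v \<in> Vt"
  have "b + t \<le> a \<bullet> xt t v" if ab: "(a,b) \<in> FI" for a b
  proof (cases "a \<bullet> v = b")
    case True then show ?thesis using act_xt[OF v ab] by simp
  next
    case False
    have "\<forall>(a,b)\<in>FI. a \<bullet> v \<noteq> b \<longrightarrow> b + t < a \<bullet> xt t v" by (rule bspec[OF S v])
    from bspec[OF this ab] show ?thesis using False by simp
  qed
  then show "xt t v \<in> Pt t" unfolding Pt_def by blast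
qed

lemma G_small: "\<exists>t>0. \<forall>v\<in>Vt. \<forall>(a,b)\<in>FI. a \<bullet> v \<noteq> b \<longrightarrow> b + t < a \<bullet> xt t v"
proof -
  define I where "I = {(v,(a,b)). v \<in> Vt \<and> (a,b) \<in> FI \<and> a \<bullet> v \<noteq> b}"
  have "I \<subseteq> Vt \<times> FI" unfolding I_def by auto
  then have finI: "finite I" using Vt_fin FI_finite finite_subset by blast
  have Ipos: "fst (snd i) \<bullet> fst i - snd (snd i) > 0" if "i \<in> I" for i
  proof -
    obtain v a b where i: "i = (v,(a,b))" by (metis prod.collapse)
    have "v \<in> Vt" "(a,b) \<in> FI" "a \<bullet> v \<noteq> b" using that unfolding I_def i by auto
    moreover have "b \<le> a \<bullet> v" using FI_mem(2)[OF \<open>(a,b)\<in>FI\<close>] Vt_P[OF \<open>v\<in>Vt\<close>] by blast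
    ultimately show ?thesis unfolding i by simp
  qed
  obtain e where e: "e > 0" "\<forall>i\<in>I. \<forall>e'. 0 \<le> e' \<and> e' \<le> e \<longrightarrow> e' * (1 - fst (snd i) \<bullet> w (fst i)) < fst (snd i) \<bullet> fst i - snd (snd i)"
    using ex_small[OF finI, of "\<lambda>i. fst (snd i) \<bullet> fst i - snd (snd i)" "\<lambda>i. 1 - fst (snd i) \<bullet> w (fst i)"] Ipos by blast
  have "\<forall>v\<in>Vt. \<forall>(a,b)\<in>FI. a \<bullet> v \<noteq> b \<longrightarrow> b + e < a \<bullet> xt e v"
  proof (intro ballI, clarify)
    fix v a b assume v: "v \<in> Vt" and ab: "(a,b) \<in> FI" and ne: "a \<bullet> v \<noteq> b"
    have "(v,(a,b)) \<in> I" unfolding I_def using v ab ne by blast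
    then have "e * (1 - a \<bullet> w v) < a \<bullet> v - b" using e by (metis fst_conv snd_conv order_refl less_imp_le)
    then show "b + e < a \<bullet> xt e v" unfolding xt_def by (simp add: inner_add_right algebra_simps)
  qed
  then show ?thesis using e(1) by blast
qed

lemma fan_small: "\<exists>t>0. normal_fan (Pt t) = normal_fan P"
proof -
  obtain t where t: "t > 0" and S: "\<forall>v\<in>Vt. \<forall>(a,b)\<in>FI. a \<bullet> v \<noteq> b \<longrightarrow> b + t < a \<bullet> xt t v"
    using G_small by blast
  have H: "\<forall>v\<in>Vt. xt t v \<in> Pt t" by (rule S_imp_H[OF S])
  have "normal_fan (Pt t) = normal_fan P"
  proof (rule fan_transfer[OF compact_P convex_P compact_Pt convex_Pt])
    show "0 \<le> t" using t by simp
    show "{y. y extreme_point_of Pt t} = xt t ` {y. y extreme_point_of P}"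
      using G_ext[OF H] unfolding Vt_def by simp
    fix y assume "y extreme_point_of P"
    then have y: "y \<in> Vt" unfolding Vt_def by simp
    show "normal_cone (Pt t) {xt t y} = normal_cone P {y}"
      using G_nc_eq[OF S y] unfolding sgm_def .
  qed
  then show ?thesis using t by blast
qed

end

context fdlpw begin

lemma G3:
  assumes t0: "t0 > 0" and fan: "normal_fan (Pt t0) = normal_fan P" and v: "v \<in> Vt"
  shows "xt t0 v \<in> Pt t0"
proof -
  let ?Q = "Pt t0"
  have cQ: "compact ?Q" using compact_Pt t0 by simp
  have vQ: "convex ?Q" by (rule convex_Pt)
  have "sgm v \<in> normal_fan ?Q" using sgm_in_fan[OF v] fan by simp
  then obtain F where F: "F face_of ?Q" "F \<noteq> {}" "sgm v = normal_cone ?Q F" unfolding normal_fan_def by blast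
  have cF: "compact F" by (rule face_of_imp_compact[OF vQ cQ F(1)])
  have vF: "convex F" using F(1) by (rule face_of_imp_convex)
  obtain y where yF: "y extreme_point_of F" using extreme_point_exists_convex[OF cF vF F(2)] by blast
  have yQe: "y extreme_point_of ?Q" and yinF: "y \<in> F" using yF extreme_point_of_face[OF F(1)] by auto
  have yQ: "y \<in> ?Q" using yinF F(1) face_of_imp_subset by blast
  have "{y} face_of ?Q" using yQe face_of_singleton by blast
  then have "normal_cone ?Q {y} \<in> normal_fan ?Q" unfolding normal_fan_def by blast
  then have Nf: "normal_cone ?Q {y} \<in> normal_fan P" using fan by simp
  have sub: "sgm v \<subseteq> normal_cone ?Q {y}" using F(3) yinF unfolding normal_cone_def by blast
  have Ny: "normal_cone ?Q {y} = sgm v" using sgm_max[OF v] Nf sub unfolding max_cones_def by blast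
  have act: "a \<bullet> y = b + t0" if ab: "(a,b) \<in> FI" and av: "a \<bullet> v = b" for a b
  proof -
    have "a \<in> sgm v" by (rule act_sgm[OF ab av])
    then have amin: "\<forall>x\<in>?Q. a \<bullet> y \<le> a \<bullet> x" using Ny unfolding normal_cone_def by blast
    obtain l where l: "\<forall>c\<in>K t0 y. l c \<ge> 0" "a = (\<Sum>c\<in>K t0 y. l c *\<^sub>R c)"
      using farkas_Pt[OF yQ amin] by blast
    have Ks: "k \<in> sgm v" if k: "k \<in> K t0 y" for k
    proof -
      obtain bk where bk: "(k,bk) \<in> FI" "k \<bullet> y = bk + t0" using k unfolding K_def by blast
      have "\<forall>x\<in>?Q. k \<bullet> y \<le> k \<bullet> x" using bk unfolding Pt_def by auto
      then have "k \<in> normal_cone ?Q {y}" unfolding normal_cone_def by blast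
      then show ?thesis using Ny by simp
    qed
    have aK: "a \<in> K t0 y"
    proof (rule ccontr)
      assume naK: "a \<notin> K t0 y"
      define G where "G = {x\<in>P. a \<bullet> x = b}"
      have "G \<noteq> {}" unfolding G_def by (rule FI_facet_ne[OF ab])
      moreover have "convex G" unfolding G_def using FI_mem(3)[OF ab] facet_of_imp_face_of face_of_imp_convex by blast
      ultimately obtain p where p: "p \<in> rel_interior G" using rel_interior_eq_empty by blast
      have pP: "p \<in> P" and ap: "a \<bullet> p = b" using p rel_interior_subset unfolding G_def by auto
      define z where "z = p - v"
      have az: "a \<bullet> z = 0" unfolding z_def using ap av by (simp add: inner_diff_right)
      have kz: "0 \<le> k \<bullet> z" if "k \<in> K t0 y" for k
        using Ks[OF that] pP unfolding sgm_iff z_def by (auto simp: inner_diff_right)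
      have nn: "\<forall>k\<in>K t0 y. 0 \<le> l k * (k \<bullet> z)" using l(1) kz by simp
      have "(\<Sum>k\<in>K t0 y. l k * (k \<bullet> z)) = a \<bullet> z" using l(2) by (simp add: inner_sum_left)
      then have "(\<Sum>k\<in>K t0 y. l k * (k \<bullet> z)) = 0" using az by simp
      moreover have "(\<Sum>k\<in>K t0 y. l k * (k \<bullet> z)) = 0 \<longleftrightarrow> (\<forall>k\<in>K t0 y. l k * (k \<bullet> z) = 0)"
        by (rule sum_nonneg_eq_0_iff[OF K_fin]) (use nn in blast)
      ultimately have z0: "\<forall>k\<in>K t0 y. l k * (k \<bullet> z) = 0" by blast
      have l0: "l k = 0" if k: "k \<in> K t0 y" for k
      proof (rule ccontr)
        assume lk: "l k \<noteq> 0"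
        then have kz0: "k \<bullet> z = 0" using bspec[OF z0 k] by simp
        obtain bk where bk: "(k,bk) \<in> FI" using k unfolding K_def by blast
        have "\<forall>x\<in>P. k \<bullet> p \<le> k \<bullet> x"
        proof
          fix x assume "x \<in> P"
          then have "k \<bullet> v \<le> k \<bullet> x" using Ks[OF k] unfolding sgm_iff by blast
          moreover have "k \<bullet> p = k \<bullet> v" using kz0 unfolding z_def by (simp add: inner_diff_right)
          ultimately show "k \<bullet> p \<le> k \<bullet> x" by simp
        qed
        then obtain c where c: "c \<ge> 0" "k = c *\<^sub>R a" using PL[OF ab] p unfolding G_def by blast
        have "c \<noteq> 0" using c FI_a0[OF bk] by auto
        then have "c > 0" using c by simp
        then have "c = 1" using prim_unique[OF FI_mem(1)[OF ab]] FI_mem(1)[OF bk] c(2) by simp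
        then have "k = a" using c by simp
        then show False using naK k by simp
      qed
      have "a = (\<Sum>c\<in>K t0 y. 0 *\<^sub>R c)" using l(2) l0 by simp
      then have "a = 0" by simp
      then show False using FI_a0[OF ab] by simp
    qed
    then obtain b' where b': "(a,b') \<in> FI" "a \<bullet> y = b' + t0" unfolding K_def by blast
    have "b = b'" by (rule FI_b_unique[OF ab b'(1)])
    then show ?thesis using b' by simp
  qed
  have h: "a \<bullet> (y - xt t0 v) = 0" if "(a,b) \<in> FI" "a \<bullet> v = b" for a b
    using act[OF that] act_xt[OF v that] by (simp add: inner_diff_right)
  have "y - xt t0 v = 0" by (rule vspan[OF v]) (use h in blast)
  then show ?thesis using yQ by simp
qed

definition "SS = {s. s > 0 \<and> normal_fan (inner_par P s) = normal_fan P}"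

lemma SS_eq: "SS = {s. s > 0 \<and> normal_fan (Pt s) = normal_fan P}"
  unfolding SS_def inner_par_eq ..

lemma SS_ne: "SS \<noteq> {}" using fan_small unfolding SS_eq by blast

lemma SS_bdd: "bdd_above SS"
proof -
  obtain R where R: "\<forall>x\<in>P. norm x \<le> R" using compact_P compact_imp_bounded bounded_iff by metis
  obtain a0 b0 where ab0: "(a0,b0) \<in> FI" using FI_ne by auto
  have "s \<le> norm a0 * R - b0" if s: "s \<in> SS" for s
  proof -
    have s0: "s > 0" and fan: "normal_fan (Pt s) = normal_fan P" using s unfolding SS_eq by auto
    obtain v where v: "v \<in> Vt" using Vt_ne by blast
    have "sgm v \<in> normal_fan (Pt s)" using sgm_in_fan[OF v] fan by simp
    then obtain F where "F face_of Pt s" "F \<noteq> {}" unfolding normal_fan_def by blast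
    then obtain y where y: "y \<in> Pt s" using face_of_imp_subset by blast
    have "Pt s \<subseteq> P" using s0 by (intro Pt_sub) simp
    then have yP: "y \<in> P" using y by blast
    have "b0 + s \<le> a0 \<bullet> y" using y ab0 unfolding Pt_def by auto
    also have "\<dots> \<le> norm a0 * norm y" by (rule norm_cauchy_schwarz)
    also have "\<dots> \<le> norm a0 * R" using R yP by (intro mult_left_mono) auto
    finally show ?thesis by simp
  qed
  then show ?thesis unfolding bdd_above_def by blast
qed

lemma SS_sup_pos: "Sup SS > 0"
proof -
  obtain s where s: "s \<in> SS" using SS_ne by blast
  then have "s \<le> Sup SS" using SS_bdd by (intro cSup_upper)
  moreover have "s > 0" using s unfolding SS_def by simp
  ultimately show ?thesis by simp
qed

lemma G5:
  assumes t: "0 < t" "t \<le> Sup SS" and v: "v \<in> Vt"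
  shows "xt t v \<in> Pt t"
proof (rule ccontr)
  assume nin: "xt t v \<notin> Pt t"
  then obtain a b where ab: "(a,b) \<in> FI" and lt: "a \<bullet> xt t v < b + t" unfolding Pt_def by auto
  have na: "a \<bullet> v \<noteq> b" using act_xt[OF v ab] lt by auto
  have g: "a \<bullet> v - b > 0" using FI_mem(2)[OF ab] Vt_P[OF v] na by force
  define d where "d = a \<bullet> w v - 1"
  have fx: "a \<bullet> xt s v - (b + s) = (a \<bullet> v - b) + s * d" for s unfolding xt_def d_def by (simp add: inner_add_right algebra_simps)
  have ft: "(a \<bullet> v - b) + t * d < 0" using lt fx[of t] by simp
  have d0: "d < 0"
  proof (rule ccontr)
    assume "\<not> d < 0"
    then have "t * d \<ge> 0" using t by simp
    then show False using ft g by linarith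
  qed
  define T where "T = (a \<bullet> v - b) / (- d)"
  have dpos: "- d > 0" using d0 by simp
  have Tiff: "T < s \<longleftrightarrow> a \<bullet> v - b < s * (- d)" for s unfolding T_def by (rule pos_divide_less_eq[OF dpos])
  have Tt: "T < t" unfolding Tiff using ft by simp
  then have "T < Sup SS" using t by simp
  then obtain t0 where t0: "t0 \<in> SS" "T < t0" using less_cSup_iff[OF SS_ne SS_bdd] by blast
  have t0p: "t0 > 0" and fan: "normal_fan (Pt t0) = normal_fan P" using t0(1) unfolding SS_eq by auto
  have "(a \<bullet> v - b) + t0 * d < 0"
  proof -
    have "(a \<bullet> v - b) < t0 * (- d)" using t0(2) unfolding Tiff .
    then show ?thesis by simp
  qed
  then have "a \<bullet> xt t0 v < b + t0" using fx[of t0] by simp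
  moreover have "xt t0 v \<in> Pt t0" by (rule G3[OF t0p fan v])
  ultimately show False using ab unfolding Pt_def by fastforce
qed

end

lemma facet_scale:
  fixes P G :: "(real^'n) set"
  assumes c: "c > 0"
  shows "((\<lambda>x. c *\<^sub>R x) ` G facet_of (\<lambda>x. c *\<^sub>R x) ` P) \<longleftrightarrow> G facet_of P"
proof -
  let ?f = "\<lambda>x::real^'n. c *\<^sub>R x"
  have lin: "linear ?f" by (intro linearI) (auto simp: scaleR_add_right)
  have inj: "inj ?f" using c unfolding inj_def by simp
  show ?thesis unfolding facet_of_def
    using face_of_linear_image[OF lin inj] aff_dim_injective_linear_image[OF lin inj] by simp
qed

lemma FI_scale:
  fixes P :: "(real^'n) set"
  assumes c: "c > 0"
  shows "facet_ineqs ((\<lambda>x. c *\<^sub>R x) ` P) = (\<lambda>(a,b). (a, c * b)) ` facet_ineqs P"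
proof -
  let ?f = "\<lambda>x::real^'n. c *\<^sub>R x"
  have key: "(a,b') \<in> facet_ineqs (?f ` P) \<longleftrightarrow> (a, b' / c) \<in> facet_ineqs P" for a b'
  proof -
    have h1: "(\<forall>y\<in>?f ` P. b' \<le> a \<bullet> y) \<longleftrightarrow> (\<forall>x\<in>P. b' / c \<le> a \<bullet> x)"
      using c by (simp add: pos_divide_le_eq mult.commute)
    have h2: "{y\<in>?f ` P. a \<bullet> y = b'} = ?f ` {x\<in>P. a \<bullet> x = b' / c}"
    proof
      show "{y\<in>?f ` P. a \<bullet> y = b'} \<subseteq> ?f ` {x\<in>P. a \<bullet> x = b' / c}"
      proof
        fix y assume "y \<in> {y\<in>?f ` P. a \<bullet> y = b'}"
        then obtain x where x: "x \<in> P" "y = c *\<^sub>R x" "a \<bullet> y = b'" by blast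
        then have "a \<bullet> x = b' / c" using c by (auto simp: field_simps)
        then show "y \<in> ?f ` {x\<in>P. a \<bullet> x = b' / c}" using x by blast
      qed
      show "?f ` {x\<in>P. a \<bullet> x = b' / c} \<subseteq> {y\<in>?f ` P. a \<bullet> y = b'}" using c by auto
    qed
    have h3: "(?f ` {x\<in>P. a \<bullet> x = b' / c} facet_of ?f ` P) \<longleftrightarrow> {x\<in>P. a \<bullet> x = b' / c} facet_of P"
      by (rule facet_scale[OF c])
    show ?thesis unfolding facet_ineqs_def using h1 h2 h3 by simp
  qed
  show ?thesis
  proof
    show "facet_ineqs (?f ` P) \<subseteq> (\<lambda>(a,b). (a, c * b)) ` facet_ineqs P"
    proof clarify
      fix a b' assume "(a,b') \<in> facet_ineqs (?f ` P)"
      then have "(a, b'/c) \<in> facet_ineqs P" using key by simp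
      moreover have "(a,b') = (\<lambda>(a,b). (a, c * b)) (a, b'/c)" using c by simp
      ultimately show "(a,b') \<in> (\<lambda>(a,b). (a, c * b)) ` facet_ineqs P" by (rule rev_image_eqI)
    qed
    show "(\<lambda>(a,b). (a, c * b)) ` facet_ineqs P \<subseteq> facet_ineqs (?f ` P)"
    proof clarify
      fix a b assume "(a,b) \<in> facet_ineqs P"
      then show "(a, c * b) \<in> facet_ineqs (?f ` P)" using key[of a "c * b"] c by simp
    qed
  qed
qed

context fdlp begin

lemma inner_par_scale:
  assumes c: "c > 0"
  shows "inner_par ((\<lambda>x. c *\<^sub>R x) ` P) r = (\<lambda>x. c *\<^sub>R x) ` Pt (r / c)"
proof -
  let ?f = "\<lambda>x::real^'n. c *\<^sub>R x"
  have FIs: "facet_ineqs (?f ` P) = (\<lambda>(a,b). (a, c * b)) ` FI" unfolding FI_def by (rule FI_scale[OF c])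
  have mem: "x \<in> inner_par (?f ` P) r \<longleftrightarrow> (\<forall>(a,b)\<in>FI. r \<le> a \<bullet> x - c * b)" for x
  proof -
    have "(\<lambda>(a, b). a \<bullet> x - b) ` facet_ineqs (?f ` P) = (\<lambda>(a, b). a \<bullet> x - c * b) ` FI"
      unfolding FIs by (auto simp: image_iff)
    moreover have "finite ((\<lambda>(a, b). a \<bullet> x - c * b) ` FI)" using FI_finite by simp
    moreover have "(\<lambda>(a, b). a \<bullet> x - c * b) ` FI \<noteq> {}" using FI_ne by simp
    ultimately show ?thesis unfolding inner_par_def lattice_dist_def by (auto simp: Min_ge_iff)
  qed
  have mem2: "(\<forall>(a,b)\<in>FI. r \<le> a \<bullet> x - c * b) \<longleftrightarrow> (1/c) *\<^sub>R x \<in> Pt (r / c)" for x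
  proof -
    have "r \<le> a \<bullet> x - c * b \<longleftrightarrow> b + r / c \<le> a \<bullet> ((1/c) *\<^sub>R x)" for a b
    proof -
      have "b + r / c \<le> a \<bullet> ((1/c) *\<^sub>R x) \<longleftrightarrow> b + r / c \<le> (a \<bullet> x) / c" by simp
      also have "\<dots> \<longleftrightarrow> (b + r / c) * c \<le> a \<bullet> x" using c by (rule pos_le_divide_eq)
      also have "\<dots> \<longleftrightarrow> r \<le> a \<bullet> x - c * b" using c by (simp add: algebra_simps)
      finally show ?thesis by simp
    qed
    then show ?thesis unfolding Pt_def by auto
  qed
  show ?thesis
  proof
    show "inner_par (?f ` P) r \<subseteq> ?f ` Pt (r / c)"
    proof
      fix x assume "x \<in> inner_par (?f ` P) r"
      then have "(1/c) *\<^sub>R x \<in> Pt (r / c)" using mem mem2 by simp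
      moreover have "x = c *\<^sub>R ((1/c) *\<^sub>R x)" using c by simp
      ultimately show "x \<in> ?f ` Pt (r / c)" by (rule rev_image_eqI)
    qed
    show "?f ` Pt (r / c) \<subseteq> inner_par (?f ` P) r"
    proof clarify
      fix y assume "y \<in> Pt (r / c)"
      moreover have "(1/c) *\<^sub>R (c *\<^sub>R y) = y" using c by simp
      ultimately show "c *\<^sub>R y \<in> inner_par (?f ` P) r" using mem mem2 by simp
    qed
  qed
qed

end

theorem proposition1p13:
  fixes P :: "(real^'n) set" and r :: nat
  assumes "lattice_polytope P"
    and "aff_dim P = int CARD('n)"
    and "QGor_fan (normal_fan P) r"
  shows "(\<forall>s::int. real_of_int s \<ge> real r * nef_value P \<longrightarrow>
            lattice_polytope (inner_par ((\<lambda>x. real_of_int s *\<^sub>R x) ` P) (real r)))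
         \<and> real (codegree P) - 1 < real r * nef_value P"
proof -
  interpret fdlp P using assms(1,2) by unfold_locales
  have QG: "r > 0 \<and> (\<forall>v\<in>Vt. \<exists>w. (\<forall>(a,b)\<in>FI. a \<bullet> v = b \<longrightarrow> a \<bullet> w = 1) \<and> int_vec (real r *\<^sub>R w))"
    by (rule QG_main[OF assms(3)])
  then have r0: "r > 0" by blast
  obtain w where w: "\<forall>v\<in>Vt. (\<forall>(a,b)\<in>FI. a \<bullet> v = b \<longrightarrow> a \<bullet> w v = 1) \<and> int_vec (real r *\<^sub>R w v)"
    using bchoice[of Vt "\<lambda>v w. (\<forall>(a,b)\<in>FI. a \<bullet> v = b \<longrightarrow> a \<bullet> w = 1) \<and> int_vec (real r *\<^sub>R w)"] QG by blast
  have wW: "a \<bullet> w v = 1" if "v \<in> Vt" "(a,b) \<in> FI" "a \<bullet> v = b" for v a b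
  proof -
    have "\<forall>(a,b)\<in>FI. a \<bullet> v = b \<longrightarrow> a \<bullet> w v = 1" using w that(1) by blast
    from bspec[OF this that(2)] show ?thesis using that(3) by simp
  qed
  interpret fdlpw P w by unfold_locales (rule wW)
  have nef: "nef_value P = inverse (Sup SS)" unfolding nef_value_def SS_def ..
  have sp: "Sup SS > 0" by (rule SS_sup_pos)
  have main: "real_of_int s > 0 \<and>
      inner_par ((\<lambda>x. real_of_int s *\<^sub>R x) ` P) (real r) = convex hull ((\<lambda>v. real_of_int s *\<^sub>R xt (real r / real_of_int s) v) ` Vt)
      \<and> (\<forall>v\<in>Vt. xt (real r / real_of_int s) v \<in> Pt (real r / real_of_int s))
      \<and> (\<forall>v\<in>Vt. int_vec (real_of_int s *\<^sub>R xt (real r / real_of_int s) v))"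
    if s: "real_of_int s \<ge> real r * nef_value P" for s :: int
  proof -
    have pos: "real r * nef_value P > 0" using r0 sp nef by simp
    then have s0: "real_of_int s > 0" using s by simp
    define t where "t = real r / real_of_int s"
    have t0: "t > 0" unfolding t_def using r0 s0 by simp
    have "real r / Sup SS \<le> real_of_int s" using s nef by (simp add: divide_inverse)
    then have "real r \<le> real_of_int s * Sup SS" using sp by (simp add: pos_divide_le_eq mult.commute)
    then have tle: "t \<le> Sup SS" unfolding t_def using s0 by (simp add: pos_divide_le_eq mult.commute)
    have H: "\<forall>v\<in>Vt. xt t v \<in> Pt t" using G5[OF t0 tle] by blast
    have "inner_par ((\<lambda>x. real_of_int s *\<^sub>R x) ` P) (real r) = (\<lambda>x. real_of_int s *\<^sub>R x) ` Pt t"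
      unfolding t_def by (rule inner_par_scale[OF s0])
    also have "\<dots> = (\<lambda>x. real_of_int s *\<^sub>R x) ` (convex hull (xt t ` Vt))" using G_conv[OF H] by simp
    also have "\<dots> = convex hull ((\<lambda>x. real_of_int s *\<^sub>R x) ` xt t ` Vt)" by (simp add: convex_hull_scaling)
    also have "\<dots> = convex hull ((\<lambda>v. real_of_int s *\<^sub>R xt t v) ` Vt)" by (simp add: image_image)
    finally have eq: "inner_par ((\<lambda>x. real_of_int s *\<^sub>R x) ` P) (real r) = convex hull ((\<lambda>v. real_of_int s *\<^sub>R xt t v) ` Vt)" .
    have ints: "int_vec (real_of_int s *\<^sub>R xt t v)" if v: "v \<in> Vt" for v
    proof -
      have "real_of_int s *\<^sub>R xt t v = real_of_int s *\<^sub>R v + real r *\<^sub>R w v"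
        unfolding xt_def t_def using s0 by (simp add: scaleR_add_right)
      moreover have "int_vec (real_of_int s *\<^sub>R v)" using Vt_int[OF v] unfolding int_vec_def by (simp add: Ints_mult)
      moreover have "int_vec (real r *\<^sub>R w v)" using w v by blast
      ultimately show ?thesis unfolding int_vec_def by (simp add: Ints_add)
    qed
    show ?thesis using s0 eq H ints unfolding t_def by blast
  qed
  have part1: "\<forall>s::int. real_of_int s \<ge> real r * nef_value P \<longrightarrow>
            lattice_polytope (inner_par ((\<lambda>x. real_of_int s *\<^sub>R x) ` P) (real r))"
  proof (intro allI impI)
    fix s :: int assume s: "real_of_int s \<ge> real r * nef_value P"
    note m = main[OF s]
    show "lattice_polytope (inner_par ((\<lambda>x. real_of_int s *\<^sub>R x) ` P) (real r))"
      unfolding lattice_polytope_def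
      by (rule exI[of _ "(\<lambda>v. real_of_int s *\<^sub>R xt (real r / real_of_int s) v) ` Vt"])
         (use m Vt_fin Vt_ne in auto)
  qed
  define s0 where "s0 = \<lceil>real r * nef_value P\<rceil>"
  have s0ge: "real_of_int s0 \<ge> real r * nef_value P" unfolding s0_def by simp
  have s0lt: "real_of_int s0 < real r * nef_value P + 1" unfolding s0_def using ceiling_correct by linarith
  note m = main[OF s0ge]
  have s0p: "real_of_int s0 > 0" using m by blast
  define t where "t = real r / real_of_int s0"
  have t0: "t > 0" unfolding t_def using r0 s0p by simp
  obtain v0 where v0: "v0 \<in> Vt" using Vt_ne by blast
  define z where "z = real_of_int s0 *\<^sub>R xt t v0"
  have zint: "int_vec z" unfolding z_def t_def using m v0 by blast
  have xin: "xt t v0 \<in> Pt t" unfolding t_def using m v0 by blast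
  define U where "U = (\<Inter>p\<in>FI. {x. fst p \<bullet> x > real_of_int s0 * snd p})"
  have oU: "open U" unfolding U_def using FI_finite by (intro open_INT) (auto simp: open_halfspace_gt)
  have UP: "U \<subseteq> (\<lambda>y. real (nat s0) *\<^sub>R y) ` P"
  proof
    fix x assume x: "x \<in> U"
    have "(1 / real_of_int s0) *\<^sub>R x \<in> P"
    proof -
      have "b \<le> a \<bullet> ((1 / real_of_int s0) *\<^sub>R x)" if ab: "(a,b) \<in> FI" for a b
      proof -
        have "real_of_int s0 * b < a \<bullet> x" using x ab unfolding U_def by force
        then have "b < (a \<bullet> x) / real_of_int s0" using s0p by (simp add: pos_less_divide_eq mult.commute)
        then show ?thesis by simp
      qed
      then show ?thesis using P_eq by blast
    qed
    moreover have "x = real (nat s0) *\<^sub>R ((1 / real_of_int s0) *\<^sub>R x)" using s0p by simp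
    ultimately show "x \<in> (\<lambda>y. real (nat s0) *\<^sub>R y) ` P" by (rule rev_image_eqI)
  qed
  have zU: "z \<in> U"
    unfolding U_def
  proof (rule INT_I, clarify)
    fix a b assume ab: "(a,b) \<in> FI"
    have "b + t \<le> a \<bullet> xt t v0" using xin ab unfolding Pt_def by blast
    then have "b < a \<bullet> xt t v0" using t0 by simp
    then have "real_of_int s0 * b < real_of_int s0 * (a \<bullet> xt t v0)" using s0p by simp
    then show "real_of_int s0 * snd (a,b) < fst (a,b) \<bullet> z" unfolding z_def by simp
  qed
  have zint2: "z \<in> interior ((\<lambda>y. real (nat s0) *\<^sub>R y) ` P)" using interior_maximal[OF UP oU] zU by blast
  have ns: "nat s0 \<ge> 1" using s0p by simp
  have "codegree P \<le> nat s0"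
    unfolding codegree_def by (rule Least_le) (use ns zint zint2 in blast)
  then have "real (codegree P) \<le> real_of_int s0" using s0p by (metis of_nat_le_iff of_nat_nat less_imp_le of_int_0_less_iff)
  then have part2: "real (codegree P) - 1 < real r * nef_value P" using s0lt by linarith
  show ?thesis using part1 part2 by blast
qed


end
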